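(* Let $Y,Z$ be rearrangement invariant Banach function spaces over $(0,\infty)$. (i) If $Z\cap L^{\infty}\subset Y\cap L^{\infty}$, then for each nonincreasing $f=f^*\in Y^{1/2}Z^{1/2}$ of the form $f=\sum_{k=1}^\infty c_k\chi_{[k-1,k)}$ there exist nonincreasing $g=g^*\in Y$ and $h=h^*\in Z$ of the form $g=\sum_{k=1}^\infty a_k\chi_{[k-1,k)}$, $h=\sum_{k=1}^\infty b_k\chi_{[k-1,k)}$ such that $f\le g^{1/2}h^{1/2}$ and $h\le g$. (ii) If $Z\cap L^{1}\subset Y\cap L^{1}$, then for each nonincreasing $f=f^*\in Y^{1/2}Z^{1/2}$ with $\operatorname{supp} f\subset[0,1]$ there exist nonincreasing $g=g^*\in Y$ and $h=h^*\in Z$ such that $f\le g^{1/2}h^{1/2}$ and $h\le g$.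
   Context: A Banach function space over $(0,\infty)$ with Lebesgue measure is a Banach space of a.e. finite measurable functions with the ideal property ($|f|\le g$, $g\in X$ implies $f\in X$, $\|f\|_X\le\|g\|_X$) and the Fatou property ($0\le f_n\uparrow f$ a.e., $\sup_n\|f_n\|_X<\infty$ implies $f\in X$, $\|f\|_X=\sup_n\|f_n\|_X$); it is rearrangement invariant if equimeasurable functions have equal norms. $f^*$ denotes the nonincreasing rearrangement, so $f=f^*$ means $f$ is nonnegative, nonincreasing and right-continuous. The Calderón–Lozanovskii space $Y^{1/2}Z^{1/2}$ consists of all $f$ with $|f|\le g^{1/2}h^{1/2}$ for some $0\le g\in Y$, $0\le h\in Z$. *)

theory Defs
  imports "HOL-Analysis.Analysis"
begin

definition M0 :: "real measure" where
  "M0 = lebesgue_on {0<..}"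

text \<open>Banach function space (X, N) over (0,infinity): a normed space of (a.e. finite,
  here real-valued) measurable functions, complete, with the ideal and Fatou properties.\<close>
definition bfs :: "(real \<Rightarrow> real) set \<Rightarrow> ((real \<Rightarrow> real) \<Rightarrow> real) \<Rightarrow> bool" where
  "bfs X N \<longleftrightarrow>
     X \<subseteq> borel_measurable M0 \<and>
     (\<lambda>x. 0) \<in> X \<and>
     (\<forall>f\<in>X. \<forall>g\<in>X. (\<lambda>x. f x + g x) \<in> X) \<and>
     (\<forall>f\<in>X. \<forall>c. (\<lambda>x. c * f x) \<in> X) \<and>
     (\<forall>f\<in>X. 0 \<le> N f) \<and>
     (\<forall>f\<in>X. N f = 0 \<longleftrightarrow> (AE x in M0. f x = 0)) \<and>
     (\<forall>f\<in>X. \<forall>c. N (\<lambda>x. c * f x) = \<bar>c\<bar> * N f) \<and>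
     (\<forall>f\<in>X. \<forall>g\<in>X. N (\<lambda>x. f x + g x) \<le> N f + N g) \<and>
     (\<forall>u. (\<forall>n. u n \<in> X) \<and>
          (\<forall>e>0. \<exists>K. \<forall>m\<ge>K. \<forall>n\<ge>K. N (\<lambda>x. u m x - u n x) < e) \<longrightarrow>
          (\<exists>f\<in>X. (\<lambda>n. N (\<lambda>x. u n x - f x)) \<longlonglongrightarrow> 0)) \<and>
     (\<forall>f g. f \<in> borel_measurable M0 \<and> g \<in> X \<and> (AE x in M0. \<bar>f x\<bar> \<le> g x) \<longrightarrow>
          f \<in> X \<and> N f \<le> N g) \<and>
     (\<forall>fs f. (\<forall>n. fs n \<in> X) \<and> f \<in> borel_measurable M0 \<and>
          (AE x in M0. (\<forall>n. 0 \<le> fs n x \<and> fs n x \<le> fs (Suc n) x) \<and>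
                       (\<lambda>n. fs n x) \<longlonglongrightarrow> f x) \<and>
          bounded (range (\<lambda>n. N (fs n))) \<longrightarrow>
          f \<in> X \<and> N f = (SUP n. N (fs n)))"

definition equimeasurable :: "(real \<Rightarrow> real) \<Rightarrow> (real \<Rightarrow> real) \<Rightarrow> bool" where
  "equimeasurable f g \<longleftrightarrow>
     (\<forall>s. emeasure M0 {x \<in> space M0. s < \<bar>f x\<bar>} = emeasure M0 {x \<in> space M0. s < \<bar>g x\<bar>})"

definition ri_bfs :: "(real \<Rightarrow> real) set \<Rightarrow> ((real \<Rightarrow> real) \<Rightarrow> real) \<Rightarrow> bool" where
  "ri_bfs X N \<longleftrightarrow> bfs X N \<and>
     (\<forall>f g. f \<in> X \<and> g \<in> borel_measurable M0 \<and> equimeasurable f g \<longrightarrow> g \<in> X \<and> N g = N f)"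

definition Linf :: "(real \<Rightarrow> real) set" where
  "Linf = {f \<in> borel_measurable M0. \<exists>C. AE x in M0. \<bar>f x\<bar> \<le> C}"

definition L1 :: "(real \<Rightarrow> real) set" where
  "L1 = {f. integrable M0 f}"

definition CL :: "(real \<Rightarrow> real) set \<Rightarrow> (real \<Rightarrow> real) set \<Rightarrow> (real \<Rightarrow> real) set" where
  "CL Y Z = {f \<in> borel_measurable M0. \<exists>g\<in>Y. \<exists>h\<in>Z.
      AE x in M0. 0 \<le> g x \<and> 0 \<le> h x \<and> \<bar>f x\<bar> \<le> sqrt (g x) * sqrt (h x)}"

text \<open>f = f^*: nonnegative, nonincreasing, right-continuous on (0,infinity).\<close>
definition is_decr :: "(real \<Rightarrow> real) \<Rightarrow> bool" where
  "is_decr f \<longleftrightarrow> (\<forall>x>0. 0 \<le> f x) \<and> (\<forall>x y. 0 < x \<longrightarrow> x \<le> y \<longrightarrow> f y \<le> f x) \<and>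
     (\<forall>x>0. continuous (at_right x) f)"

text \<open>f = sum_{k>=1} c_k chi_[k-1,k) on (0,infinity).\<close>
definition step_form :: "(real \<Rightarrow> real) \<Rightarrow> bool" where
  "step_form f \<longleftrightarrow> (\<exists>c :: nat \<Rightarrow> real. \<forall>x>0. f x = c (nat \<lfloor>x\<rfloor> + 1))"

end

theory Submission
  imports Defs
begin
lemma space_M0[simp]: "space M0 = {0<..}"
  by (simp add: M0_def)

lemma sets_M0_borel: "A \<in> sets borel \<Longrightarrow> A \<subseteq> {0<..} \<Longrightarrow> A \<in> sets M0"
  unfolding M0_def
  by (simp add: sets_restrict_space_iff)

lemma emeasure_M0: "A \<in> sets borel \<Longrightarrow> A \<subseteq> {0<..} \<Longrightarrow> emeasure M0 A = emeasure lborel A"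
  unfolding M0_def
  apply (subst emeasure_restrict_space)
  apply auto
  done

lemma emeasure_lborel_Ioi_inf: "emeasure lborel {(0::real)<..} = \<infinity>"
proof -
  have "ennreal (real n) \<le> emeasure lborel {(0::real)<..}" for n
  proof -
    have "ennreal (real n) = emeasure lborel {1..real n + 1}" by simp
    also have "\<dots> \<le> emeasure lborel {(0::real)<..}" by (rule emeasure_mono) auto
    finally show ?thesis .
  qed
  then show ?thesis
  proof (cases "emeasure lborel {(0::real)<..}" rule: ennreal_cases)
    case (real r)
    obtain n :: nat where "r < real n" using reals_Archimedean2 by blast
    with real \<open>\<And>n. ennreal (real n) \<le> _\<close>[of n] show ?thesis by auto
  qed auto
qed

lemma emeasure_M0_space: "emeasure M0 {0<..} = \<infinity>"
  by (subst emeasure_M0) (auto simp: emeasure_lborel_Ioi_inf)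

lemma meas_antitone:
  fixes \<phi> :: "real \<Rightarrow> real"
  assumes "\<forall>x y. 0<x \<longrightarrow> x \<le> y \<longrightarrow> \<phi> y \<le> \<phi> x"
  shows "\<phi> \<in> borel_measurable M0"
proof -
  have "mono_on {0<..} (\<lambda>x. - \<phi> x)" using assms by (auto simp: mono_on_def)
  then have "(\<lambda>x. - \<phi> x) \<in> borel_measurable (restrict_space borel {0<..})"
    by (rule borel_measurable_mono_on_fnc)
  moreover have "sets (restrict_space borel {0<..}) \<subseteq> sets (restrict_space lebesgue {0<..})"
    by (rule mono_restrict_space) auto
  ultimately have "(\<lambda>x. - \<phi> x) \<in> borel_measurable M0"
    unfolding M0_def
    using borel_measurable_subalgebra[of "restrict_space borel {0<..}" "restrict_space lebesgue {0<..}"]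
    by (simp add: space_restrict_space)
  then show ?thesis using borel_measurable_uminus_eq by blast
qed

definition dst :: "(real \<Rightarrow> real) \<Rightarrow> real \<Rightarrow> ennreal" where
  "dst u s = emeasure M0 {x \<in> space M0. s < \<bar>u x\<bar>}"

definition Sset :: "(real \<Rightarrow> real) \<Rightarrow> real \<Rightarrow> real set" where
  "Sset u t = {s. 0 \<le> s \<and> dst u s \<le> ennreal t}"

definition rear :: "(real \<Rightarrow> real) \<Rightarrow> real \<Rightarrow> real" where
  "rear u t = Inf (Sset u t)"

definition okd :: "(real \<Rightarrow> real) \<Rightarrow> bool" where
  "okd u \<longleftrightarrow> (\<forall>t>0. Sset u t \<noteq> {})"

lemma sets_level: fixes u :: "real \<Rightarrow> real" assumes u: "u \<in> borel_measurable M0" shows "{x \<in> space M0. s < \<bar>u x\<bar>} \<in> sets M0"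
proof -
  have "{x \<in> space M0. s < \<bar>u x\<bar>} = (\<lambda>x. \<bar>u x\<bar>) -` {s<..} \<inter> space M0" by auto
  moreover have "(\<lambda>x. \<bar>u x\<bar>) -` {s<..} \<inter> space M0 \<in> sets M0"
  proof (rule measurable_sets)
    show "(\<lambda>x. \<bar>u x\<bar>) \<in> borel_measurable M0" using u by measurable
  qed auto
  ultimately show ?thesis by simp
qed

lemma sets_level': fixes u :: "real \<Rightarrow> real" shows "u \<in> borel_measurable M0 \<Longrightarrow> {x. 0 < x \<and> s < \<bar>u x\<bar>} \<in> sets M0"
  using sets_level[of u s] by simp

lemma dst_mono: "u \<in> borel_measurable M0 \<Longrightarrow> s \<le> s' \<Longrightarrow> dst u s' \<le> dst u s"
  unfolding dst_def by (rule emeasure_mono) (auto intro: sets_level')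

lemma dst_neg: "s < 0 \<Longrightarrow> dst u s = \<infinity>"
proof -
  assume "s < 0"
  then have "{x \<in> space M0. s < \<bar>u x\<bar>} = {0<..}" by auto
  then show ?thesis by (simp add: dst_def emeasure_M0_space)
qed

lemma dst_SUP:
  assumes u: "u \<in> borel_measurable M0"
  shows "(SUP n. dst u (s + 1 / Suc n)) = dst u s"
proof -
  let ?A = "\<lambda>n::nat. {x \<in> space M0. s + 1 / Suc n < \<bar>u x\<bar>}"
  have "range ?A \<subseteq> sets M0" using u by (auto intro: sets_level')
  moreover have "incseq ?A"
  proof (rule incseq_SucI)
    fix n :: nat
    have "1 / real (Suc (Suc n)) \<le> 1 / Suc n" by (simp add: frac_le)
    then show "?A n \<subseteq> ?A (Suc n)" by auto
  qed
  ultimately have "(SUP n. emeasure M0 (?A n)) = emeasure M0 (\<Union>n. ?A n)"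
    by (rule SUP_emeasure_incseq)
  moreover have "(\<Union>n. ?A n) = {x \<in> space M0. s < \<bar>u x\<bar>}"
  proof (safe)
    fix x assume x: "x \<in> space M0" "s < \<bar>u x\<bar>"
    then obtain n where "inverse (real (Suc n)) < \<bar>u x\<bar> - s"
      using reals_Archimedean[of "\<bar>u x\<bar> - s"] by auto
    then have "x \<in> ?A n" using x by (auto simp: field_simps)
    then show "x \<in> (\<Union>n. ?A n)" by blast
  next
    fix x n assume "s + 1 / real (Suc n) < \<bar>u x\<bar>"
    moreover have "0 < 1 / real (Suc n)" by simp
    ultimately show "s < \<bar>u x\<bar>" by linarith
  qed
  ultimately show ?thesis by (simp add: dst_def)
qed

lemma Sset_bdd: "bdd_below (Sset u t)"
  unfolding Sset_def by (rule bdd_belowI[of _ 0]) auto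

lemma rear_nonneg: "Sset u t \<noteq> {} \<Longrightarrow> 0 \<le> rear u t"
  unfolding rear_def by (rule cInf_greatest) (auto simp: Sset_def)

lemma rear_le: "s \<in> Sset u t \<Longrightarrow> rear u t \<le> s"
  unfolding rear_def by (rule cInf_lower[OF _ Sset_bdd])

lemma dst_rear:
  assumes u: "u \<in> borel_measurable M0" and ne: "Sset u t \<noteq> {}"
  shows "dst u (rear u t) \<le> ennreal t"
proof (rule ccontr)
  let ?r = "rear u t"
  assume "\<not> dst u ?r \<le> ennreal t"
  then have "ennreal t < (SUP n. dst u (?r + 1 / Suc n))" by (metis dst_SUP[OF u] not_le)
  then obtain n where n: "ennreal t < dst u (?r + 1 / Suc n)" by (auto simp: less_SUP_iff)
  have "Inf (Sset u t) < ?r + 1 / Suc n" by (simp add: rear_def)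
  then obtain s where s: "s \<in> Sset u t" "s < ?r + 1 / Suc n"
    using cInf_less_iff[OF ne Sset_bdd] by blast
  then have "dst u (?r + 1 / Suc n) \<le> dst u s" by (intro dst_mono[OF u]) auto
  also have "\<dots> \<le> ennreal t" using s by (auto simp: Sset_def)
  finally show False using n by simp
qed

lemma rear_gt_iff:
  assumes u: "u \<in> borel_measurable M0" and ne: "Sset u t \<noteq> {}" and s: "0 \<le> s"
  shows "s < rear u t \<longleftrightarrow> ennreal t < dst u s"
proof
  assume "s < rear u t"
  then show "ennreal t < dst u s"
    using rear_le[of s u t] s by (force simp: Sset_def not_le)
next
  assume a: "ennreal t < dst u s"
  show "s < rear u t"
  proof (rule ccontr)
    assume "\<not> s < rear u t"
    then have "dst u s \<le> dst u (rear u t)" by (intro dst_mono[OF u]) auto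
    also have "\<dots> \<le> ennreal t" by (rule dst_rear[OF u ne])
    finally show False using a by simp
  qed
qed

lemma rear_antitone:
  assumes "okd u" "0 < x" "x \<le> y"
  shows "rear u y \<le> rear u x"
  unfolding rear_def
proof (rule cInf_superset_mono)
  show "Sset u x \<noteq> {}" using assms by (auto simp: okd_def)
  show "bdd_below (Sset u y)" by (rule Sset_bdd)
  show "Sset u x \<subseteq> Sset u y" using assms(3) by (auto simp: Sset_def intro: order_trans ennreal_leI)
qed

lemma rear_meas: "okd u \<Longrightarrow> rear u \<in> borel_measurable M0"
  by (rule meas_antitone) (auto intro: rear_antitone)

lemma equi_rear:
  assumes u: "u \<in> borel_measurable M0" and ok: "okd u"
  shows "equimeasurable u (rear u)" "equimeasurable (rear u) u"
proof -
  have "emeasure M0 {x \<in> space M0. s < \<bar>u x\<bar>} = emeasure M0 {x \<in> space M0. s < \<bar>rear u x\<bar>}" for s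
  proof (cases "s < 0")
    case True
    have nn: "x > 0 \<Longrightarrow> 0 \<le> rear u x" for x using ok by (auto simp: okd_def intro: rear_nonneg)
    have "{x \<in> space M0. s < \<bar>u x\<bar>} = {0<..}" "{x \<in> space M0. s < \<bar>rear u x\<bar>} = {0<..}"
      using True nn by force+
    then show ?thesis by simp
  next
    case False
    have "{x \<in> space M0. s < \<bar>rear u x\<bar>} = {x \<in> {0<..}. ennreal x < dst u s}"
    proof -
      have "x > 0 \<Longrightarrow> (s < \<bar>rear u x\<bar> \<longleftrightarrow> ennreal x < dst u s)" for x
        using rear_gt_iff[OF u, of x s] rear_nonneg[of u x] ok False by (auto simp: okd_def)
      then show ?thesis by auto
    qed
    also have "emeasure M0 \<dots> = dst u s"
    proof (cases "dst u s" rule: ennreal_cases)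
      case (real r)
      then have "{x \<in> {0<..}. ennreal x < dst u s} = {0<..<r}" by (auto simp: ennreal_less_iff)
      then show ?thesis using real by (simp, subst emeasure_M0) auto
    next
      case top
      then show ?thesis using emeasure_M0_space by (simp add: greaterThan_def)
    qed
    finally show ?thesis by (simp add: dst_def)
  qed
  then show "equimeasurable u (rear u)" "equimeasurable (rear u) u"
    by (auto simp: equimeasurable_def)
qed

definition rc :: "(real \<Rightarrow> real) \<Rightarrow> bool" where
  "rc \<phi> \<longleftrightarrow> (\<forall>t>0. \<forall>e>0. \<exists>d>0. \<phi> t - e < \<phi> (t + d))"

lemma rear_rc:
  assumes u: "u \<in> borel_measurable M0" and ok: "okd u"
  shows "rc (rear u)"
  unfolding rc_def
proof (intro allI impI)
  fix t e :: real assume t: "0 < t" and e: "0 < e"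
  show "\<exists>d>0. rear u t - e < rear u (t + d)"
  proof (cases "rear u t - e < 0")
    case True
    have "0 \<le> rear u (t + 1)" using ok t by (auto simp: okd_def intro: rear_nonneg)
    then show ?thesis using True by (intro exI[of _ 1]) auto
  next
    case False
    let ?s = "rear u t - e"
    have "?s < rear u t" using e by simp
    then have lt: "ennreal t < dst u ?s" using rear_gt_iff[OF u, of t ?s] ok t False by (auto simp: okd_def)
    show ?thesis
    proof (cases "dst u ?s" rule: ennreal_cases)
      case (real r)
      with lt t have "t < r" by (auto simp: ennreal_less_iff)
      define d where "d = (r - t)/2"
      have d: "0 < d" "t + d < r" using t \<open>t < r\<close> by (simp_all add: d_def field_simps)
      then have "0 < r" using t by simp
      with d have "ennreal (t + d) < dst u ?s" unfolding real by (intro ennreal_lessI) auto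
      moreover have "Sset u (t + d) \<noteq> {}" using ok t d by (auto simp: okd_def)
      ultimately have "?s < rear u (t + d)"
        using rear_gt_iff[OF u, of "t + d" ?s] False by auto
      then show ?thesis using d by (intro exI[of _ d]) auto
    next
      case top
      then have "?s < rear u (t + 1)"
        using rear_gt_iff[OF u, of "t + 1" ?s] ok t False by (auto simp: okd_def)
      then show ?thesis by (intro exI[of _ 1]) auto
    qed
  qed
qed

lemma rc_cont:
  assumes anti: "\<forall>x y. 0<x \<longrightarrow> x \<le> y \<longrightarrow> \<phi> y \<le> \<phi> x" and r: "rc \<phi>" and t: "0 < t"
  shows "continuous (at_right t) \<phi>"
  unfolding continuous_within
proof (rule order_tendstoI)
  fix a assume "a < \<phi> t"
  then obtain d where d: "d > 0" "\<phi> t - (\<phi> t - a) < \<phi> (t + d)" using r t unfolding rc_def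
    by (meson diff_gt_0_iff_gt)
  show "\<forall>\<^sub>F y in at_right t. a < \<phi> y"
    unfolding eventually_at_right_field
  proof (intro exI[of _ "t + d"] conjI allI impI)
    show "t < t + d" using d by simp
    fix y assume "t < y" "y < t + d"
    then have "\<phi> (t + d) \<le> \<phi> y" using anti t by auto
    then show "a < \<phi> y" using d by simp
  qed
next
  fix a assume "\<phi> t < a"
  show "\<forall>\<^sub>F y in at_right t. \<phi> y < a"
    unfolding eventually_at_right_field
  proof (intro exI[of _ "t + 1"] conjI allI impI)
    fix y assume "t < y" "y < t + 1"
    then have "\<phi> y \<le> \<phi> t" using anti t by auto
    then show "\<phi> y < a" using \<open>\<phi> t < a\<close> by simp
  qed simp
qed

lemma bfsD:
  assumes "bfs X N"
  shows bfs_meas: "\<And>f. f \<in> X \<Longrightarrow> f \<in> borel_measurable M0"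
    and bfs_add: "\<And>f g. f \<in> X \<Longrightarrow> g \<in> X \<Longrightarrow> (\<lambda>x. f x + g x) \<in> X"
    and bfs_smult: "\<And>f c. f \<in> X \<Longrightarrow> (\<lambda>x. c * f x) \<in> X"
    and bfs_nonneg: "\<And>f. f \<in> X \<Longrightarrow> 0 \<le> N f"
    and bfs_zero: "\<And>f. f \<in> X \<Longrightarrow> N f = 0 \<longleftrightarrow> (AE x in M0. f x = 0)"
    and bfs_hom: "\<And>f c. f \<in> X \<Longrightarrow> N (\<lambda>x. c * f x) = \<bar>c\<bar> * N f"
    and bfs_tri: "\<And>f g. f \<in> X \<Longrightarrow> g \<in> X \<Longrightarrow> N (\<lambda>x. f x + g x) \<le> N f + N g"
    and bfs_ideal: "\<And>f g. f \<in> borel_measurable M0 \<Longrightarrow> g \<in> X \<Longrightarrow> (AE x in M0. \<bar>f x\<bar> \<le> g x) \<Longrightarrow>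
          f \<in> X \<and> N f \<le> N g"
    and bfs_fatou: "\<And>fs f. (\<forall>n. fs n \<in> X) \<Longrightarrow> f \<in> borel_measurable M0 \<Longrightarrow>
          (AE x in M0. (\<forall>n. 0 \<le> fs n x \<and> fs n x \<le> fs (Suc n) x) \<and>
                       (\<lambda>n. fs n x) \<longlonglongrightarrow> f x) \<Longrightarrow>
          bounded (range (\<lambda>n. N (fs n))) \<Longrightarrow> f \<in> X \<and> N f = (SUP n. N (fs n))"
  using assms unfolding bfs_def by blast+

lemma ri_bfs: "ri_bfs X N \<Longrightarrow> bfs X N"
  by (simp add: ri_bfs_def)

lemma ri_equi: "ri_bfs X N \<Longrightarrow> f \<in> X \<Longrightarrow> g \<in> borel_measurable M0 \<Longrightarrow> equimeasurable f g \<Longrightarrow> g \<in> X \<and> N g = N f"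
  by (simp add: ri_bfs_def)

lemma ri_abs:
  assumes ri: "ri_bfs X N" and u: "u \<in> X"
  shows "(\<lambda>x. \<bar>u x\<bar>) \<in> X" "N (\<lambda>x. \<bar>u x\<bar>) = N u"
proof -
  have m: "(\<lambda>x. \<bar>u x\<bar>) \<in> borel_measurable M0" using bfs_meas[OF ri_bfs[OF ri] u] by measurable
  have "equimeasurable u (\<lambda>x. \<bar>u x\<bar>)" by (simp add: equimeasurable_def)
  from ri_equi[OF ri u m this] show "(\<lambda>x. \<bar>u x\<bar>) \<in> X" "N (\<lambda>x. \<bar>u x\<bar>) = N u" by auto
qed

lemma AE_ind_zero:
  assumes "AE x in M0. indicator {0<..<t} x = (0::real)" "0 < t"
  shows False
proof -
  have "AE x in M0. x \<notin> {0<..<t}" using assms(1) by eventually_elim (auto simp: indicator_def split: if_splits)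
  moreover have "{0<..<t} \<in> sets M0" by (rule sets_M0_borel) auto
  ultimately have "emeasure M0 {0<..<t} = 0" using AE_iff_null_sets[of "{0<..<t}" M0] by auto
  moreover have "emeasure M0 {0<..<t} = ennreal t" using assms(2) by (subst emeasure_M0) auto
  ultimately show False using assms(2) by simp
qed

lemma okd_mem:
  assumes ri: "ri_bfs X N" and u: "u \<in> X"
  shows "okd u"
proof (rule ccontr)
  have bfs: "bfs X N" using ri by (rule ri_bfs)
  have um: "u \<in> borel_measurable M0" using bfs_meas[OF bfs u] .
  assume "\<not> okd u"
  then obtain t where t: "0 < t" "Sset u t = {}" by (auto simp: okd_def)
  then have big: "0 \<le> s \<Longrightarrow> ennreal t < dst u s" for s unfolding Sset_def using not_le by fastforce
  define ch where "ch = (indicator {0<..<t} :: real \<Rightarrow> real)"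
  have chm: "ch \<in> borel_measurable M0"
    unfolding ch_def by (rule borel_measurable_indicator) (rule sets_M0_borel, auto)
  have key: "(\<lambda>x. real n * ch x) \<in> X \<and> N (\<lambda>x. real n * ch x) \<le> N u" for n :: nat
  proof -
    define un where "un = (\<lambda>x. min \<bar>u x\<bar> (real n))"
    have unm: "un \<in> borel_measurable M0" unfolding un_def using um by measurable
    have un1: "un \<in> X \<and> N un \<le> N (\<lambda>x. \<bar>u x\<bar>)"
      by (rule bfs_ideal[OF bfs unm ri_abs(1)[OF ri u]]) (auto simp: un_def)
    have dn: "dst un s = dst u s" if "s < real n" for s
    proof -
      have "{x \<in> space M0. s < \<bar>un x\<bar>} = {x \<in> space M0. s < \<bar>u x\<bar>}"
        using that by (auto simp: un_def)
      then show ?thesis by (simp add: dst_def)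
    qed
    have dn0: "dst un (real n) = 0"
    proof -
      have "{x \<in> space M0. real n < \<bar>un x\<bar>} = {}" by (auto simp: un_def)
      then show ?thesis unfolding dst_def by (metis emeasure_empty)
    qed
    have okn: "okd un" unfolding okd_def Sset_def using dn0 by (auto intro!: exI[of _ "real n"])
    have ne: "0 < x \<Longrightarrow> Sset un x \<noteq> {}" for x using okn by (auto simp: okd_def)
    have ge: "real n \<le> rear un x" if x: "0 < x" "x < t" for x
    proof (rule ccontr)
      assume "\<not> real n \<le> rear un x"
      then have lt: "rear un x < real n" by simp
      let ?s = "rear un x"
      have s0: "0 \<le> ?s" using ne[OF x(1)] by (rule rear_nonneg)
      have "ennreal x < dst un ?s"
      proof -
        have "ennreal x \<le> ennreal t" using x by (intro ennreal_leI) auto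
        also have "\<dots> < dst u ?s" using big[OF s0] .
        also have "\<dots> = dst un ?s" using dn[OF lt] by simp
        finally show ?thesis .
      qed
      then have "?s < rear un x" using rear_gt_iff[OF unm ne[OF x(1)] s0] by simp
      then show False by simp
    qed
    have rm: "rear un \<in> X \<and> N (rear un) = N un"
      by (rule ri_equi[OF ri conjunct1[OF un1] rear_meas[OF okn] equi_rear(1)[OF unm okn]])
    have vm: "(\<lambda>x. real n * ch x) \<in> borel_measurable M0" using chm by measurable
    have "(\<lambda>x. real n * ch x) \<in> X \<and> N (\<lambda>x. real n * ch x) \<le> N (rear un)"
    proof (rule bfs_ideal[OF bfs vm conjunct1[OF rm]])
      show "AE x in M0. \<bar>real n * ch x\<bar> \<le> rear un x"
      proof (rule AE_I2)
        fix x assume "x \<in> space M0"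
        then have x: "0 < x" by simp
        show "\<bar>real n * ch x\<bar> \<le> rear un x"
          using ge[OF x] rear_nonneg[OF ne[OF x]] by (auto simp: ch_def indicator_def)
      qed
    qed
    then show ?thesis using rm un1 ri_abs(2)[OF ri u] by auto
  qed
  have chX: "ch \<in> X" using key[of 1] by simp
  have "real n * N ch \<le> N u" for n :: nat
    using key[of n] bfs_hom[OF bfs chX, of "real n"] by simp
  moreover have "0 \<le> N ch" by (rule bfs_nonneg[OF bfs chX])
  ultimately have "N ch = 0"
  proof -
    assume h: "\<And>n::nat. real n * N ch \<le> N u" "0 \<le> N ch"
    show "N ch = 0"
    proof (rule ccontr)
      assume "N ch \<noteq> 0"
      then have pos: "0 < N ch" using h(2) by simp
      obtain n :: nat where "N u / N ch < real n" using reals_Archimedean2 by blast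
      then have "N u < real n * N ch" using pos by (simp add: field_simps)
      then show False using h(1)[of n] by simp
    qed
  qed
  then have "AE x in M0. ch x = 0" using bfs_zero[OF bfs chX] by simp
  then show False using AE_ind_zero[of t] t(1) by (simp add: ch_def)
qed

lemma dst_dom:
  assumes ri: "ri_bfs X N" and v: "v \<in> X" and um: "u \<in> borel_measurable M0"
    and le: "\<And>s. dst u s \<le> dst v s"
  shows "u \<in> X \<and> N u \<le> N v"
proof -
  have bfs: "bfs X N" using ri by (rule ri_bfs)
  have vm: "v \<in> borel_measurable M0" using bfs_meas[OF bfs v] .
  have okv: "okd v" by (rule okd_mem[OF ri v])
  have sub: "Sset v t \<subseteq> Sset u t" for t using le by (auto simp: Sset_def intro: order_trans)
  have oku: "okd u" using okv sub unfolding okd_def by blast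
  have rle: "rear u x \<le> rear v x" if "0 < x" for x
    unfolding rear_def
    by (rule cInf_superset_mono) (use okv that sub Sset_bdd in \<open>auto simp: okd_def\<close>)
  have rv: "rear v \<in> X \<and> N (rear v) = N v"
    by (rule ri_equi[OF ri v rear_meas[OF okv] equi_rear(1)[OF vm okv]])
  have ru: "rear u \<in> X \<and> N (rear u) \<le> N (rear v)"
  proof (rule bfs_ideal[OF bfs rear_meas[OF oku] conjunct1[OF rv]])
    show "AE x in M0. \<bar>rear u x\<bar> \<le> rear v x"
    proof (rule AE_I2)
      fix x assume "x \<in> space M0"
      then have x: "0 < x" by simp
      have "0 \<le> rear u x" using oku x by (auto simp: okd_def intro: rear_nonneg)
      then show "\<bar>rear u x\<bar> \<le> rear v x" using rle[OF x] by simp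
    qed
  qed
  have "u \<in> X \<and> N u = N (rear u)"
    by (rule ri_equi[OF ri conjunct1[OF ru] um equi_rear(2)[OF um oku]])
  then show ?thesis using ru rv by auto
qed

definition Iset :: "real \<Rightarrow> real \<Rightarrow> real set" where
  "Iset e c = (\<Union>k::nat. {(2 * real k + c) * e ..< (2 * real k + c + 1) * e})"

lemma Iset_borel: "Iset e c \<in> sets borel"
  unfolding Iset_def by (intro sets.countable_UN) auto

lemma Iset_pos: "0 < e \<Longrightarrow> 1 \<le> c \<Longrightarrow> Iset e c \<subseteq> {0<..}"
proof
  fix x assume e: "0 < e" and c: "1 \<le> c" and "x \<in> Iset e c"
  then obtain k :: nat where "(2 * real k + c) * e \<le> x" by (auto simp: Iset_def)
  moreover have "0 < (2 * real k + c) * e" using e c by (intro mult_pos_pos) auto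
  ultimately show "x \<in> {0<..}" by auto
qed

lemma Iset_bound:
  assumes e: "0 < e" and c: "1 \<le> c" and x: "0 \<le> x"
  shows "emeasure lborel (Iset e c \<inter> {0<..x}) \<le> ennreal (x / 2)"
proof -
  define q where "q = nat \<lfloor>x / (2 * e)\<rfloor>"
  have "real q \<le> x / (2 * e)" unfolding q_def using x e by (simp add: of_nat_nat)
  then have q1: "2 * real q * e \<le> x" using e by (simp add: field_simps)
  have "x / (2 * e) < real q + 1" unfolding q_def using x e
    by (metis floor_less_iff of_int_1 of_int_add of_nat_nat zero_le_floor zero_le_divide_iff
        less_eq_real_def mult_pos_pos zero_less_numeral of_int_of_nat_eq real_of_nat_eq_numeral_power_cancel_iff
        add.commute floor_correct less_add_one)
  then have q2: "x < 2 * (real q + 1) * e" using e by (simp add: field_simps)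
  let ?I = "\<lambda>k::nat. {(2 * real k + c) * e ..< (2 * real k + c + 1) * e}"
  have sub: "Iset e c \<inter> {0<..x} \<subseteq> (\<Union>k\<in>{..<q}. ?I k) \<union> {(2 * real q + c) * e .. x}"
  proof
    fix t assume "t \<in> Iset e c \<inter> {0<..x}"
    then obtain k :: nat where k: "(2 * real k + c) * e \<le> t" "t < (2 * real k + c + 1) * e" "t \<le> x"
      by (auto simp: Iset_def)
    have "(2 * real k + c) * e < 2 * (real q + 1) * e" using k q2 by linarith
    then have "2 * real k + c < 2 * (real q + 1)" using e by (simp add: mult_less_cancel_right)
    then have "real k < real (q + 1)" using c by simp
    then have "k \<le> q" by (simp only: of_nat_less_iff)
    then show "t \<in> (\<Union>k\<in>{..<q}. ?I k) \<union> {(2 * real q + c) * e .. x}"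
      using k by (cases "k < q") (auto intro!: bexI[of _ k])
  qed
  have "emeasure lborel (Iset e c \<inter> {0<..x}) \<le> emeasure lborel ((\<Union>k\<in>{..<q}. ?I k) \<union> {(2 * real q + c) * e .. x})"
    by (rule emeasure_mono[OF sub]) auto
  also have "\<dots> \<le> emeasure lborel (\<Union>k\<in>{..<q}. ?I k) + emeasure lborel {(2 * real q + c) * e .. x}"
    by (rule emeasure_subadditive) auto
  also have "emeasure lborel (\<Union>k\<in>{..<q}. ?I k) \<le> (\<Sum>k\<in>{..<q}. emeasure lborel (?I k))"
    by (rule emeasure_subadditive_finite) auto
  also have "(\<Sum>k\<in>{..<q}. emeasure lborel (?I k)) = (\<Sum>k\<in>{..<q}. ennreal e)"
    using e by (intro sum.cong) (auto simp: algebra_simps)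
  also have "\<dots> = ennreal (real q * e)" using e by (simp add: ennreal_of_nat_eq_real_of_nat ennreal_mult)
  also have "emeasure lborel {(2 * real q + c) * e .. x} = ennreal (max 0 (x - (2 * real q + c) * e))"
    by (simp add: emeasure_lborel_Icc_eq max_def)
  also have "ennreal (real q * e) + ennreal (max 0 (x - (2 * real q + c) * e)) =
      ennreal (real q * e + max 0 (x - (2 * real q + c) * e))"
    using e by (simp add: ennreal_plus)
  also have "\<dots> \<le> ennreal (x / 2)"
  proof (rule ennreal_leI)
    show "real q * e + max 0 (x - (2 * real q + c) * e) \<le> x / 2"
    proof (cases "x \<le> (2 * real q + c) * e")
      case True then show ?thesis using q1 by (simp add: max_def)
    next
      case False
      have "(real q + 1) * e \<le> (real q + c) * e" using c e by (intro mult_right_mono) auto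
      then show ?thesis using False q2 by (simp add: max_def algebra_simps)
    qed
  qed
  finally show ?thesis by (simp add: add_right_mono)
qed

definition antit :: "(real \<Rightarrow> real) \<Rightarrow> bool" where
  "antit \<phi> \<longleftrightarrow> (\<forall>x y. 0<x \<longrightarrow> x \<le> y \<longrightarrow> \<phi> y \<le> \<phi> x) \<and> (\<forall>x>0. 0 \<le> \<phi> x)"

lemma antit_half: "antit \<phi> \<Longrightarrow> antit (\<lambda>x. \<phi> (x / 2))"
  unfolding antit_def by (auto simp: divide_right_mono)

lemma antit_meas: "antit \<phi> \<Longrightarrow> \<phi> \<in> borel_measurable M0"
  unfolding antit_def by (rule meas_antitone) blast

lemma dst_antit_bound:
  assumes a: "antit \<phi>" and "0 \<le> s" and d: "dst \<phi> s = ennreal d" and y: "0 < y" "s < \<phi> y"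
  shows "y \<le> d"
proof (rule ccontr)
  assume "\<not> y \<le> d"
  have "{0<..y} \<subseteq> {x \<in> space M0. s < \<bar>\<phi> x\<bar>}"
  proof
    fix x assume "x \<in> {0<..y}"
    then have "\<phi> y \<le> \<phi> x" "0 \<le> \<phi> x" using a by (auto simp: antit_def)
    then show "x \<in> {x \<in> space M0. s < \<bar>\<phi> x\<bar>}" using y \<open>x \<in> {0<..y}\<close> by auto
  qed
  then have "emeasure M0 {0<..y} \<le> dst \<phi> s"
    unfolding dst_def by (rule emeasure_mono) (rule sets_level[OF antit_meas[OF a]])
  moreover have "emeasure M0 {0<..y} = ennreal y" using y by (subst emeasure_M0) auto
  ultimately have "ennreal y \<le> ennreal d" using d by simp
  then have "y \<le> d" using y by (simp add: ennreal_le_iff2)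
  then show False using \<open>\<not> y \<le> d\<close> by simp
qed

lemma dil_piece:
  assumes ri: "ri_bfs X N" and \<phi>: "\<phi> \<in> X" and a: "antit \<phi>"
    and S: "S \<in> sets borel" "S \<subseteq> {0<..}" and bd: "\<And>x. 0 \<le> x \<Longrightarrow> emeasure lborel (S \<inter> {0<..x}) \<le> ennreal (x / 2)"
  shows "(\<lambda>x. \<phi> (x / 2) * indicator S x) \<in> X \<and> N (\<lambda>x. \<phi> (x / 2) * indicator S x) \<le> N \<phi>"
proof (rule dst_dom[OF ri \<phi>])
  have "S \<in> sets M0" using S by (rule sets_M0_borel)
  then show "(\<lambda>x. \<phi> (x / 2) * indicator S x) \<in> borel_measurable M0"
    using antit_meas[OF antit_half[OF a]] by measurable
  fix s
  show "dst (\<lambda>x. \<phi> (x / 2) * indicator S x) s \<le> dst \<phi> s"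
  proof (cases "s < 0")
    case True then show ?thesis by (simp add: dst_neg)
  next
    case False
    show ?thesis
    proof (cases "dst \<phi> s" rule: ennreal_cases)
      case top then show ?thesis by simp
    next
      case (real d)
      have "{x \<in> space M0. s < \<bar>\<phi> (x / 2) * indicator S x\<bar>} \<subseteq> S \<inter> {0<..2 * d}"
      proof
        fix x assume x: "x \<in> {x \<in> space M0. s < \<bar>\<phi> (x / 2) * indicator S x\<bar>}"
        then have x0: "0 < x" by simp
        have xS: "x \<in> S" using x False by (cases "x \<in> S") auto
        then have "s < \<phi> (x / 2)" using x a x0 by (auto simp: antit_def)
        then have "x / 2 \<le> d" by (intro dst_antit_bound[OF a _ real(2)]) (use False x0 in auto)
        then show "x \<in> S \<inter> {0<..2 * d}" using xS x0 by auto
      qed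
      then have "dst (\<lambda>x. \<phi> (x / 2) * indicator S x) s \<le> emeasure M0 (S \<inter> {0<..2 * d})"
        unfolding dst_def by (rule emeasure_mono) (use S in \<open>auto intro: sets_M0_borel\<close>)
      also have "\<dots> = emeasure lborel (S \<inter> {0<..2 * d})" using S by (subst emeasure_M0) auto
      also have "\<dots> \<le> ennreal (2 * d / 2)" using bd[of "2 * d"] real by simp
      finally show ?thesis using real by simp
    qed
  qed
qed

lemma Iset_cover:
  assumes e: "0 < e" and x: "e \<le> x"
  shows "x \<in> Iset e 1 \<union> Iset e 2"
proof -
  define j where "j = nat \<lfloor>x / e\<rfloor>"
  have xe: "1 \<le> x / e" using e x by (simp add: field_simps)
  have j1: "real j \<le> x / e" unfolding j_def using xe by (simp add: of_nat_nat)
  have j2: "x / e < real j + 1" unfolding j_def using xe by (simp add: of_nat_nat)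
  have "1 \<le> j" unfolding j_def using xe by (simp add: le_nat_floor)
  have a: "real j * e \<le> x" using j1 e by (simp add: field_simps)
  have b: "x < (real j + 1) * e" using j2 e by (simp add: field_simps)
  show ?thesis
  proof (cases "odd j")
    case True
    then obtain k where "j = 2 * k + 1" using oddE by blast
    then have "x \<in> {(2 * real k + 1) * e ..< (2 * real k + 1 + 1) * e}" using a b by (auto simp: algebra_simps)
    then show ?thesis unfolding Iset_def by blast
  next
    case False
    then obtain m where m: "j = 2 * m" using evenE by blast
    with \<open>1 \<le> j\<close> obtain k where "m = Suc k" by (cases m) auto
    then have "j = 2 * k + 2" using m by simp
    then have "x \<in> {(2 * real k + 2) * e ..< (2 * real k + 2 + 1) * e}" using a b by (auto simp: algebra_simps)
    then show ?thesis unfolding Iset_def by blast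
  qed
qed

lemma dilation:
  assumes ri: "ri_bfs X N" and \<phi>: "\<phi> \<in> X" and a: "antit \<phi>"
  shows "(\<lambda>x. \<phi> (x / 2)) \<in> X"
proof -
  have bfs: "bfs X N" using ri by (rule ri_bfs)
  let ?\<psi> = "\<lambda>x. \<phi> (x / 2)"
  have a2: "antit ?\<psi>" using a by (rule antit_half)
  have \<psi>m: "?\<psi> \<in> borel_measurable M0" using a2 by (rule antit_meas)
  define ep where "ep n = 1 / real (Suc n)" for n
  have ep0: "0 < ep n" for n by (simp add: ep_def)
  define fs where "fs n = (\<lambda>x. ?\<psi> x * indicator {ep n..} x)" for n
  have fsX: "fs n \<in> X \<and> N (fs n) \<le> 2 * N \<phi>" for n
  proof -
    let ?A = "Iset (ep n) 1" and ?B = "Iset (ep n) 2"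
    have PA: "(\<lambda>x. ?\<psi> x * indicator ?A x) \<in> X \<and> N (\<lambda>x. ?\<psi> x * indicator ?A x) \<le> N \<phi>"
      by (rule dil_piece[OF ri \<phi> a Iset_borel Iset_pos[OF ep0] Iset_bound[OF ep0]]) auto
    have PB: "(\<lambda>x. ?\<psi> x * indicator ?B x) \<in> X \<and> N (\<lambda>x. ?\<psi> x * indicator ?B x) \<le> N \<phi>"
      by (rule dil_piece[OF ri \<phi> a Iset_borel Iset_pos[OF ep0] Iset_bound[OF ep0]]) auto
    let ?P = "\<lambda>x. ?\<psi> x * indicator ?A x + ?\<psi> x * indicator ?B x"
    have PX: "?P \<in> X" using bfs_add[OF bfs conjunct1[OF PA] conjunct1[OF PB]] .
    have PN: "N ?P \<le> 2 * N \<phi>" using bfs_tri[OF bfs conjunct1[OF PA] conjunct1[OF PB]] PA PB by simp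
    have "{ep n..} \<inter> space M0 \<in> sets M0" by (rule sets_M0_borel) auto
    then have "(indicator {ep n..} :: real \<Rightarrow> real) \<in> borel_measurable M0" by (simp only: borel_measurable_indicator_iff)
    then have "fs n \<in> borel_measurable M0" unfolding fs_def using \<psi>m by (intro borel_measurable_times) auto
    moreover have "AE x in M0. \<bar>fs n x\<bar> \<le> ?P x"
    proof (rule AE_I2)
      fix x assume "x \<in> space M0"
      then have x: "0 < x" by simp
      have p: "0 \<le> ?\<psi> x" using a2 x by (auto simp: antit_def)
      show "\<bar>fs n x\<bar> \<le> ?P x"
      proof (cases "ep n \<le> x")
        case True
        then have "x \<in> ?A \<or> x \<in> ?B" using Iset_cover[OF ep0 True] by blast
        then show ?thesis using p True by (auto simp: fs_def indicator_def)
      next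
        case False
        then show ?thesis using p by (auto simp: fs_def indicator_def)
      qed
    qed
    ultimately have "fs n \<in> X \<and> N (fs n) \<le> N ?P" by (rule bfs_ideal[OF bfs _ PX])
    then show ?thesis using PN by auto
  qed
  have "?\<psi> \<in> X \<and> N ?\<psi> = (SUP n. N (fs n))"
  proof (rule bfs_fatou[OF bfs _ \<psi>m])
    show "\<forall>n. fs n \<in> X" using fsX by blast
    show "AE x in M0. (\<forall>n. 0 \<le> fs n x \<and> fs n x \<le> fs (Suc n) x) \<and> (\<lambda>n. fs n x) \<longlonglongrightarrow> ?\<psi> x"
    proof (rule AE_I2)
      fix x assume "x \<in> space M0"
      then have x: "0 < x" by simp
      have p: "0 \<le> ?\<psi> x" using a2 x by (auto simp: antit_def)
      have epm: "ep (Suc n) \<le> ep n" for n by (simp add: ep_def frac_le)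
      have "0 \<le> fs n x \<and> fs n x \<le> fs (Suc n) x" for n
        using p epm[of n] by (auto simp: fs_def indicator_def)
      moreover have "(\<lambda>n. fs n x) \<longlonglongrightarrow> ?\<psi> x"
      proof (rule tendsto_eventually)
        obtain M where M: "inverse (real (Suc M)) < x" using reals_Archimedean[OF x] by blast
        have "\<forall>n\<ge>M. fs n x = ?\<psi> x"
        proof (intro allI impI)
          fix n assume "M \<le> n"
          then have "ep n \<le> inverse (real (Suc M))" by (simp add: ep_def frac_le inverse_eq_divide)
          then show "fs n x = ?\<psi> x" using M by (simp add: fs_def)
        qed
        then show "\<forall>\<^sub>F n in sequentially. fs n x = ?\<psi> x" unfolding eventually_sequentially by blast
      qed
      ultimately show "(\<forall>n. 0 \<le> fs n x \<and> fs n x \<le> fs (Suc n) x) \<and> (\<lambda>n. fs n x) \<longlonglongrightarrow> ?\<psi> x" by blast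
    qed
    show "bounded (range (\<lambda>n. N (fs n)))"
      unfolding bounded_real
    proof (intro exI ballI)
      fix y assume "y \<in> range (\<lambda>n. N (fs n))"
      then obtain n where "y = N (fs n)" by auto
      then show "\<bar>y\<bar> \<le> 2 * N \<phi>" using fsX[of n] bfs_nonneg[OF bfs] by auto
    qed
  qed
  then show ?thesis by blast
qed

lemma decr_antit: "is_decr f \<Longrightarrow> antit f"
  by (auto simp: is_decr_def antit_def)

lemma antit_rc_decr: "antit f \<Longrightarrow> rc f \<Longrightarrow> is_decr f"
  unfolding is_decr_def using rc_cont[of f] by (auto simp: antit_def)

lemma prod_ineq:
  assumes f: "is_decr f" and gm: "g \<in> borel_measurable M0" and hm: "h \<in> borel_measurable M0"
    and okg: "okd g" and okh: "okd h"
    and ae: "AE x in M0. 0 \<le> g x \<and> 0 \<le> h x \<and> \<bar>f x\<bar> \<le> sqrt (g x) * sqrt (h x)"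
    and t: "0 < t"
  shows "f t \<le> sqrt (rear g (t / 2)) * sqrt (rear h (t / 2))"
proof (rule ccontr)
  define a where "a = rear g (t / 2)"
  define b where "b = rear h (t / 2)"
  have t2: "0 < t / 2" using t by simp
  have a0: "0 \<le> a" unfolding a_def using okg t2 by (auto simp: okd_def intro: rear_nonneg)
  have b0: "0 \<le> b" unfolding b_def using okh t2 by (auto simp: okd_def intro: rear_nonneg)
  have da: "dst g a \<le> ennreal (t / 2)" unfolding a_def using okg t2 by (auto simp: okd_def intro: dst_rear[OF gm])
  have db: "dst h b \<le> ennreal (t / 2)" unfolding b_def using okh t2 by (auto simp: okd_def intro: dst_rear[OF hm])
  define c where "c = sqrt a * sqrt b"
  assume "\<not> f t \<le> sqrt (rear g (t / 2)) * sqrt (rear h (t / 2))"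
  then have ct: "c < f t" by (simp add: c_def a_def b_def)
  have "continuous (at_right t) f" using f t by (auto simp: is_decr_def)
  then have "(f \<longlongrightarrow> f t) (at_right t)" by (simp add: continuous_within)
  then have "\<forall>\<^sub>F y in at_right t. c < f y" using ct by (rule order_tendstoD(1))
  then obtain b' where b': "t < b'" "\<And>y. t < y \<Longrightarrow> y < b' \<Longrightarrow> c < f y"
    unfolding eventually_at_right_field by blast
  have fy: "c < f y" if "0 < y" "y < b'" for y
  proof (cases "y \<le> t")
    case True
    then have "f t \<le> f y" using f that by (auto simp: is_decr_def)
    then show ?thesis using ct by simp
  next
    case False then show ?thesis using b' that by auto
  qed
  let ?G = "{x \<in> space M0. a < \<bar>g x\<bar>}" and ?H = "{x \<in> space M0. b < \<bar>h x\<bar>}"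
  have "AE x in M0. x \<in> {0<..<b'} \<longrightarrow> x \<in> ?G \<union> ?H"
    using ae
  proof eventually_elim
    case (elim x)
    show ?case
    proof
      assume x: "x \<in> {0<..<b'}"
      show "x \<in> ?G \<union> ?H"
      proof (rule ccontr)
        assume "x \<notin> ?G \<union> ?H"
        then have "\<bar>g x\<bar> \<le> a" "\<bar>h x\<bar> \<le> b" using x by auto
        then have "g x \<le> a" "h x \<le> b" using elim by auto
        then have "sqrt (g x) * sqrt (h x) \<le> c" unfolding c_def
          using a0 b0 elim by (intro mult_mono) auto
        moreover have "c < \<bar>f x\<bar>" using fy[of x] x by auto
        ultimately show False using elim by simp
      qed
    qed
  qed
  then have "emeasure M0 {0<..<b'} \<le> emeasure M0 (?G \<union> ?H)"
    by (rule emeasure_mono_AE) (intro sets.Un sets_level gm hm)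
  also have "\<dots> \<le> emeasure M0 ?G + emeasure M0 ?H"
    by (rule emeasure_subadditive) (intro sets_level gm hm)+
  also have "\<dots> \<le> ennreal (t / 2) + ennreal (t / 2)"
    using da db by (intro add_mono) (auto simp: dst_def)
  also have "\<dots> = ennreal t" using t by (simp flip: ennreal_plus)
  finally have "emeasure M0 {0<..<b'} \<le> ennreal t" .
  moreover have "emeasure M0 {0<..<b'} = ennreal b'" using t b' by (subst emeasure_M0) auto
  ultimately have "b' \<le> t" using t by (simp add: ennreal_le_iff2)
  then show False using b' by simp
qed

lemma rear_antit: "okd u \<Longrightarrow> antit (rear u)"
  unfolding antit_def using rear_antitone[of u] rear_nonneg[of u] by (auto simp: okd_def)

lemma rc_half: "rc \<phi> \<Longrightarrow> rc (\<lambda>x. \<phi> (x / 2))"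
  unfolding rc_def
proof (intro allI impI)
  fix t e :: real assume r: "\<forall>t>0. \<forall>e>0. \<exists>d>0. \<phi> t - e < \<phi> (t + d)" and t: "0 < t" and e: "0 < e"
  then obtain d where d: "0 < d" "\<phi> (t / 2) - e < \<phi> (t / 2 + d)" by (meson half_gt_zero)
  have eq: "(t + 2 * d) / 2 = t / 2 + d" by simp
  have "\<phi> (t / 2) - e < \<phi> ((t + 2 * d) / 2)" unfolding eq by (rule d(2))
  then show "\<exists>d>0. \<phi> (t / 2) - e < \<phi> ((t + d) / 2)" using d by (intro exI[of _ "2 * d"]) auto
qed

lemma core:
  assumes riY: "ri_bfs Y NY" and riZ: "ri_bfs Z NZ" and f: "is_decr f" and fCL: "f \<in> CL Y Z"
  shows "\<exists>G0 H0. is_decr G0 \<and> G0 \<in> Y \<and> is_decr H0 \<and> H0 \<in> Z \<and> (\<forall>x>0. f x \<le> sqrt (G0 x) * sqrt (H0 x))"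
proof -
  obtain g h where g: "g \<in> Y" and h: "h \<in> Z"
    and ae: "AE x in M0. 0 \<le> g x \<and> 0 \<le> h x \<and> \<bar>f x\<bar> \<le> sqrt (g x) * sqrt (h x)"
    using fCL by (auto simp: CL_def)
  have gm: "g \<in> borel_measurable M0" using bfs_meas[OF ri_bfs[OF riY] g] .
  have hm: "h \<in> borel_measurable M0" using bfs_meas[OF ri_bfs[OF riZ] h] .
  have okg: "okd g" by (rule okd_mem[OF riY g])
  have okh: "okd h" by (rule okd_mem[OF riZ h])
  have rg: "rear g \<in> Y" using ri_equi[OF riY g rear_meas[OF okg] equi_rear(1)[OF gm okg]] by blast
  have rh: "rear h \<in> Z" using ri_equi[OF riZ h rear_meas[OF okh] equi_rear(1)[OF hm okh]] by blast
  let ?G = "\<lambda>x. rear g (x / 2)" and ?H = "\<lambda>x. rear h (x / 2)"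
  have "is_decr ?G"
    by (intro antit_rc_decr antit_half rc_half rear_antit rear_rc gm okg)
  moreover have "is_decr ?H"
    by (intro antit_rc_decr antit_half rc_half rear_antit rear_rc hm okh)
  moreover have "?G \<in> Y" by (rule dilation[OF riY rg rear_antit[OF okg]])
  moreover have "?H \<in> Z" by (rule dilation[OF riZ rh rear_antit[OF okh]])
  moreover have "\<forall>x>0. f x \<le> sqrt (?G x) * sqrt (?H x)"
    using prod_ineq[OF f gm hm okg okh ae] by blast
  ultimately show ?thesis by blast
qed

definition Ik :: "real \<Rightarrow> nat \<Rightarrow> real set" where
  "Ik h k = {real k * h <.. (real k + 1) * h}"

lemma Ik_borel: "Ik h k \<in> sets borel" by (simp add: Ik_def)

lemma Ik_pos: "0 < h \<Longrightarrow> Ik h k \<subseteq> {0<..}"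
proof
  fix x assume h: "0 < h" and "x \<in> Ik h k"
  then have "real k * h < x" by (simp add: Ik_def)
  moreover have "0 \<le> real k * h" using h by simp
  ultimately show "x \<in> {0<..}" by simp
qed

lemma Ik_sets: "0 < h \<Longrightarrow> Ik h k \<in> sets M0"
  by (rule sets_M0_borel[OF Ik_borel Ik_pos])

lemma Ik_meas: "0 < h \<Longrightarrow> emeasure M0 (Ik h k) = ennreal h"
  by (subst emeasure_M0[OF Ik_borel Ik_pos]) (auto simp: Ik_def algebra_simps)

lemma Ik_disj:
  assumes h: "0 < h" and "x \<in> Ik h k" "x \<in> Ik h k'"
  shows "k = k'"
proof -
  from assms have a: "real k * h < x" "x \<le> (real k + 1) * h" "real k' * h < x" "x \<le> (real k' + 1) * h"
    by (auto simp: Ik_def)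
  then have "real k * h < (real k' + 1) * h" "real k' * h < (real k + 1) * h" by linarith+
  then have "real k < real k' + 1" "real k' < real k + 1" using h by (simp_all add: mult_less_cancel_right)
  then show ?thesis by linarith
qed

lemma Ik_find:
  assumes h: "0 < h" and x: "0 < x"
  shows "x \<in> Ik h (nat \<lceil>x / h\<rceil> - 1)" "x \<le> real n * h \<Longrightarrow> nat \<lceil>x / h\<rceil> - 1 < n"
proof -
  have xh: "0 < x / h" using h x by simp
  then have m1: "1 \<le> \<lceil>x / h\<rceil>" by simp
  have m1': "1 \<le> nat \<lceil>x / h\<rceil>" using m1 by (subst le_nat_iff) auto
  have r: "real (nat \<lceil>x / h\<rceil> - 1) = real_of_int \<lceil>x / h\<rceil> - 1" using m1 m1' by (simp add: of_nat_diff)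
  have c1: "real_of_int \<lceil>x / h\<rceil> - 1 < x / h" by linarith
  have c2: "x / h \<le> real_of_int \<lceil>x / h\<rceil>" by linarith
  have "x = (x / h) * h" using h by simp
  also have "\<dots> \<le> real_of_int \<lceil>x / h\<rceil> * h" by (rule mult_right_mono[OF c2]) (use h in simp)
  finally have d2: "x \<le> real_of_int \<lceil>x / h\<rceil> * h" .
  have "(real_of_int \<lceil>x / h\<rceil> - 1) * h < (x / h) * h" by (rule mult_strict_right_mono[OF c1 h])
  then have d1: "(real_of_int \<lceil>x / h\<rceil> - 1) * h < x" using h by simp
  show "x \<in> Ik h (nat \<lceil>x / h\<rceil> - 1)"
    unfolding Ik_def r using d1 d2 by auto
  assume "x \<le> real n * h"
  then have "x / h \<le> real n" using h by (simp add: field_simps)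
  then have "\<lceil>x / h\<rceil> \<le> int n" by (simp add: ceiling_le_iff)
  then show "nat \<lceil>x / h\<rceil> - 1 < n" using m1 by linarith
qed

lemma sum_ind:
  assumes h: "0 < h" and k0: "k0 < n" and x: "x \<in> Ik h k0"
  shows "(\<Sum>k<n. c k * indicator (Ik h k) x) = (c k0 :: real)"
proof -
  have "(\<Sum>k<n. c k * indicator (Ik h k) x) = (\<Sum>k<n. if k = k0 then c k else 0)"
  proof (rule sum.cong)
    fix k assume "k \<in> {..<n}"
    show "c k * indicator (Ik h k) x = (if k = k0 then c k else 0)"
    proof (cases "k = k0")
      case True then show ?thesis using x by simp
    next
      case False
      then have "x \<notin> Ik h k" using Ik_disj[OF h x, of k] by auto
      then show ?thesis using False by simp
    qed
  qed simp
  also have "\<dots> = c k0" using k0 by simp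
  finally show ?thesis .
qed

lemma modinj: assumes "(k + i) mod n = (k' + i) mod n" "k < n" "k' < (n::nat)" shows "k = k'"
proof -
  have *: "a = b" if ab: "a \<le> b" "b < n" "(a + i) mod n = (b + i) mod n" for a b
  proof (rule ccontr)
    assume "a \<noteq> b"
    have "n dvd (b + i) - (a + i)" using mod_eq_dvd_iff_nat[of "a+i" "b+i" n] ab by auto
    then have "n dvd b - a" by simp
    moreover have "b - a < n" "0 < b - a" using ab \<open>a \<noteq> b\<close> by auto
    ultimately show False using nat_dvd_not_less by blast
  qed
  show ?thesis
  proof (cases "k \<le> k'")
    case True then show ?thesis using * assms by blast
  next
    case False then show ?thesis using *[of k' k] assms by auto
  qed
qed

lemma rot_bij:
  assumes n: "0 < (n::nat)"
  shows "bij_betw (\<lambda>k. (k + i) mod n) {..<n} {..<n}"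
proof -
  have inj: "inj_on (\<lambda>k. (k + i) mod n) {..<n}"
  proof (rule inj_onI)
    fix k k' assume k: "k \<in> {..<n}" "k' \<in> {..<n}" and e: "(k + i) mod n = (k' + i) mod n"
    then show "k = k'" using modinj[OF e] k by auto
  qed
  moreover have "(\<lambda>k. (k + i) mod n) ` {..<n} \<subseteq> {..<n}" using n by auto
  ultimately have "(\<lambda>k. (k + i) mod n) ` {..<n} = {..<n}"
    by (intro endo_inj_surj) auto
  with inj show ?thesis by (simp add: bij_betw_def)
qed

lemma rot_sum:
  assumes n: "0 < (n::nat)"
  shows "(\<Sum>i<n. F ((k + i) mod n)) = (\<Sum>j<n. (F j :: real))"
proof -
  have "bij_betw (\<lambda>i. (i + k) mod n) {..<n} {..<n}" by (rule rot_bij[OF n])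
  then have "(\<Sum>i<n. F ((i + k) mod n)) = (\<Sum>j<n. F j)" by (rule sum.reindex_bij_betw)
  then show ?thesis by (simp add: add.commute)
qed

lemma rot_card:
  assumes n: "0 < (n::nat)"
  shows "card {k \<in> {..<n}. P ((k + i) mod n)} = card {j \<in> {..<n}. P j}"
proof -
  have b: "bij_betw (\<lambda>k. (k + i) mod n) {..<n} {..<n}" by (rule rot_bij[OF n])
  have "bij_betw (\<lambda>k. (k + i) mod n) {k \<in> {..<n}. P ((k + i) mod n)} {j \<in> {..<n}. P j}"
  proof -
    have inj: "inj_on (\<lambda>k. (k + i) mod n) {k \<in> {..<n}. P ((k + i) mod n)}"
      using b by (auto simp: bij_betw_def intro: inj_on_subset)
    have "(\<lambda>k. (k + i) mod n) ` {k \<in> {..<n}. P ((k + i) mod n)} = {j \<in> {..<n}. P j}"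
    proof
      show "(\<lambda>k. (k + i) mod n) ` {k \<in> {..<n}. P ((k + i) mod n)} \<subseteq> {j \<in> {..<n}. P j}"
        using n by auto
      show "{j \<in> {..<n}. P j} \<subseteq> (\<lambda>k. (k + i) mod n) ` {k \<in> {..<n}. P ((k + i) mod n)}"
      proof
        fix j assume j: "j \<in> {j \<in> {..<n}. P j}"
        then have "j \<in> (\<lambda>k. (k + i) mod n) ` {..<n}" using b by (auto simp: bij_betw_def)
        then obtain k where "k \<in> {..<n}" "j = (k + i) mod n" by auto
        then show "j \<in> (\<lambda>k. (k + i) mod n) ` {k \<in> {..<n}. P ((k + i) mod n)}" using j by auto
      qed
    qed
    with inj show ?thesis by (simp add: bij_betw_def)
  qed
  then show ?thesis by (rule bij_betw_same_card)
qed

lemma bfs_zero_mem: "bfs X N \<Longrightarrow> (\<lambda>x. 0) \<in> X"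
  by (simp add: bfs_def)

lemma bfs_sum:
  fixes n :: nat and F :: "nat \<Rightarrow> real \<Rightarrow> real"
  assumes bfs: "bfs X N" and F: "\<And>i. i < n \<Longrightarrow> F i \<in> X"
  shows "(\<lambda>x. \<Sum>i<n. F i x) \<in> X \<and> N (\<lambda>x. \<Sum>i<n. F i x) \<le> (\<Sum>i<n. N (F i))"
  using F
proof (induction n)
  case 0
  have z: "(\<lambda>x. 0::real) \<in> X" by (rule bfs_zero_mem[OF bfs])
  moreover have "N (\<lambda>x. 0) = 0" using bfs_zero[OF bfs z] by simp
  ultimately show ?case by simp
next
  case (Suc n)
  then have IH: "(\<lambda>x. \<Sum>i<n. F i x) \<in> X \<and> N (\<lambda>x. \<Sum>i<n. F i x) \<le> (\<Sum>i<n. N (F i))" by auto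
  have Fn: "F n \<in> X" using Suc.prems by auto
  have "(\<lambda>x. (\<Sum>i<n. F i x) + F n x) \<in> X" using bfs_add[OF bfs conjunct1[OF IH] Fn] .
  moreover have "N (\<lambda>x. (\<Sum>i<n. F i x) + F n x) \<le> N (\<lambda>x. \<Sum>i<n. F i x) + N (F n)"
    using bfs_tri[OF bfs conjunct1[OF IH] Fn] .
  ultimately show ?case using IH by simp
qed

lemma avg_bound:
  assumes ri: "ri_bfs X N" and \<phi>: "\<phi> \<in> X" and a: "antit \<phi>" and \<tau>: "0 < \<tau>"
    and chX: "indicator {0<..\<tau>} \<in> X" and n: "0 < n"
  shows "(\<Sum>j<n. \<phi> (\<tau> / real n * real (j + 1))) * N (indicator {0<..\<tau>}) \<le> real n * N \<phi>"
proof -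
  have bfs: "bfs X N" using ri by (rule ri_bfs)
  define h where "h = \<tau> / real n"
  have h: "0 < h" using \<tau> n by (simp add: h_def)
  have nh: "real n * h = \<tau>" using n by (simp add: h_def)
  define c where "c j = \<phi> (h * real (j + 1))" for j
  have c0: "0 \<le> c j" for j unfolding c_def using a h by (auto simp: antit_def)
  define R where "R i = (\<lambda>x. \<Sum>k<n. c ((k + i) mod n) * indicator (Ik h k) x)" for i
  have Rm: "R i \<in> borel_measurable M0" for i
    unfolding R_def by (intro borel_measurable_sum borel_measurable_times borel_measurable_const
        borel_measurable_indicator Ik_sets h)
  have Rval: "R i x = c ((k0 + i) mod n)" if "k0 < n" "x \<in> Ik h k0" for i x k0
    unfolding R_def by (rule sum_ind[OF h that])
  have out: "x \<notin> Ik h k" if "\<tau> < x" "k < n" for x k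
  proof
    assume "x \<in> Ik h k"
    then have "x \<le> (real k + 1) * h" by (simp add: Ik_def)
    moreover have "(real k + 1) * h \<le> real n * h" using that(2) h by (intro mult_right_mono) auto
    ultimately show False using that(1) nh by simp
  qed
  have Rout: "R i x = 0" if "\<tau> < x" for i x
    unfolding R_def using out[OF that] by simp
  have Rnn: "0 \<le> R i x" for i x unfolding R_def using c0 by (intro sum_nonneg) auto
  have find: "\<exists>k0<n. x \<in> Ik h k0" if "0 < x" "x \<le> \<tau>" for x
    using Ik_find[OF h that(1)] that(2) nh by auto
  have RX: "R i \<in> X \<and> N (R i) \<le> N \<phi>" for i
  proof (rule dst_dom[OF ri \<phi> Rm])
    fix s
    show "dst (R i) s \<le> dst \<phi> s"
    proof (cases "s < 0")
      case True then show ?thesis by (simp add: dst_neg)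
    next
      case False
      define K where "K = {k \<in> {..<n}. s < c ((k + i) mod n)}"
      define J where "J = {j \<in> {..<n}. s < c j}"
      have sub1: "{x \<in> space M0. s < \<bar>R i x\<bar>} \<subseteq> (\<Union>k\<in>K. Ik h k)"
      proof
        fix x assume x: "x \<in> {x \<in> space M0. s < \<bar>R i x\<bar>}"
        show "x \<in> (\<Union>k\<in>K. Ik h k)"
        proof (cases "x \<le> \<tau>")
          case True
          then obtain k0 where k0: "k0 < n" "x \<in> Ik h k0" using find x by auto
          then have "s < c ((k0 + i) mod n)" using x Rval[OF k0] c0 by auto
          then show ?thesis using k0 by (auto simp: K_def)
        next
          case False
          then show ?thesis using x Rout[of x i] \<open>\<not> s < 0\<close> by auto
        qed
      qed
      have "dst (R i) s \<le> emeasure M0 (\<Union>k\<in>K. Ik h k)"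
        unfolding dst_def by (rule emeasure_mono[OF sub1]) (auto intro: Ik_sets h)
      also have "\<dots> \<le> (\<Sum>k\<in>K. emeasure M0 (Ik h k))"
        by (rule emeasure_subadditive_finite) (auto simp: K_def intro: Ik_sets h)
      also have "\<dots> = of_nat (card K) * ennreal h" by (simp add: Ik_meas[OF h])
      also have "card K = card J" unfolding K_def J_def by (rule rot_card[OF n])
      also have "of_nat (card J) * ennreal h = (\<Sum>j\<in>J. emeasure M0 (Ik h j))" by (simp add: Ik_meas[OF h])
      also have "\<dots> = emeasure M0 (\<Union>j\<in>J. Ik h j)"
      proof (rule sum_emeasure)
        show "Ik h ` J \<subseteq> sets M0" using Ik_sets[OF h] by auto
        show "disjoint_family_on (Ik h) J"
          unfolding disjoint_family_on_def using Ik_disj[OF h] by blast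
        show "finite J" by (simp add: J_def)
      qed
      also have "\<dots> \<le> dst \<phi> s"
        unfolding dst_def
      proof (rule emeasure_mono)
        show "(\<Union>j\<in>J. Ik h j) \<subseteq> {x \<in> space M0. s < \<bar>\<phi> x\<bar>}"
        proof
          fix x assume "x \<in> (\<Union>j\<in>J. Ik h j)"
          then obtain j where j: "j \<in> J" "x \<in> Ik h j" by auto
          have x0: "0 < x" using Ik_pos[OF h] j(2) by auto
          have "x \<le> h * real (j + 1)" using j(2) by (simp add: Ik_def algebra_simps)
          then have "c j \<le> \<phi> x" unfolding c_def using a x0 by (auto simp: antit_def)
          moreover have "0 \<le> \<phi> x" using a x0 by (auto simp: antit_def)
          ultimately show "x \<in> {x \<in> space M0. s < \<bar>\<phi> x\<bar>}" using j x0 by (auto simp: J_def)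
        qed
        show "{x \<in> space M0. s < \<bar>\<phi> x\<bar>} \<in> sets M0" by (rule sets_level[OF antit_meas[OF a]])
      qed
      finally show ?thesis .
    qed
  qed
  define S where "S = (\<lambda>x. \<Sum>i<n. R i x)"
  have SX: "S \<in> X \<and> N S \<le> (\<Sum>i<n. N (R i))" unfolding S_def by (rule bfs_sum[OF bfs]) (use RX in blast)
  have "(\<Sum>i<n. N (R i)) \<le> (\<Sum>i<n. N \<phi>)" using RX by (intro sum_mono) auto
  then have SN: "N S \<le> real n * N \<phi>" using SX by simp
  define C where "C = (\<Sum>j<n. c j)"
  have C0: "0 \<le> C" unfolding C_def using c0 by (intro sum_nonneg) auto
  have chm: "(\<lambda>x. C * indicator {0<..\<tau>} x) \<in> borel_measurable M0"
    using bfs_meas[OF bfs chX] by measurable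
  have "(\<lambda>x. C * indicator {0<..\<tau>} x) \<in> X \<and> N (\<lambda>x. C * indicator {0<..\<tau>} x) \<le> N S"
  proof (rule bfs_ideal[OF bfs chm conjunct1[OF SX]])
    show "AE x in M0. \<bar>C * indicator {0<..\<tau>} x\<bar> \<le> S x"
    proof (rule AE_I2)
      fix x assume "x \<in> space M0"
      then have x: "0 < x" by simp
      show "\<bar>C * indicator {0<..\<tau>} x\<bar> \<le> S x"
      proof (cases "x \<le> \<tau>")
        case True
        then obtain k0 where k0: "k0 < n" "x \<in> Ik h k0" using find x by auto
        have "S x = (\<Sum>i<n. c ((k0 + i) mod n))" unfolding S_def using Rval[OF k0] by simp
        also have "\<dots> = C" unfolding C_def by (rule rot_sum[OF n])
        finally show ?thesis using True x C0 by simp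
      next
        case False
        then show ?thesis unfolding S_def using Rnn by (simp add: sum_nonneg)
      qed
    qed
  qed
  then have "C * N (indicator {0<..\<tau>}) \<le> N S"
    using bfs_hom[OF bfs chX, of C] C0 by simp
  then have "C * N (indicator {0<..\<tau>}) \<le> real n * N \<phi>" using SN by linarith
  moreover have "C = (\<Sum>j<n. \<phi> (\<tau> / real n * real (j + 1)))" unfolding C_def c_def h_def by simp
  ultimately show ?thesis by simp
qed

lemma ind_Ioc_meas: "0 \<le> a \<Longrightarrow> (indicator {a<..b} :: real \<Rightarrow> real) \<in> borel_measurable M0"
proof -
  assume "0 \<le> a"
  then have "{a<..b} \<inter> space M0 \<in> sets M0" by (intro sets_M0_borel) auto
  then show ?thesis by (simp only: borel_measurable_indicator_iff)
qed

lemma ind_Ioc_meas': "0 \<le> a \<Longrightarrow> (indicator {a<..b} :: real \<Rightarrow> ennreal) \<in> borel_measurable M0"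
proof -
  assume "0 \<le> a"
  then have "{a<..b} \<inter> space M0 \<in> sets M0" by (intro sets_M0_borel) auto
  then show ?thesis by (simp only: borel_measurable_indicator_iff)
qed

lemma step_int_bound:
  assumes a: "antit \<phi>" and \<tau>: "0 < \<tau>" and n: "0 < n"
  shows "(\<integral>\<^sup>+x. ennreal (\<phi> x * indicator {\<tau> / real n<..\<tau>} x) \<partial>M0)
           \<le> ennreal (\<tau> / real n * (\<Sum>j<n. \<phi> (\<tau> / real n * real (j + 1))))"
proof -
  define h where "h = \<tau> / real n"
  have h: "0 < h" using \<tau> n by (simp add: h_def)
  have nh: "real n * h = \<tau>" using n by (simp add: h_def)
  define c where "c j = \<phi> (h * real (j + 1))" for j
  have c0: "0 \<le> c j" for j unfolding c_def using a h by (auto simp: antit_def)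
  have "(\<integral>\<^sup>+x. ennreal (\<phi> x * indicator {h<..\<tau>} x) \<partial>M0)
      \<le> (\<integral>\<^sup>+x. (\<Sum>j<n. ennreal (c j) * indicator (Ik h (j + 1)) x) \<partial>M0)"
  proof (rule nn_integral_mono)
    fix x assume "x \<in> space M0"
    then have x: "0 < x" by simp
    show "ennreal (\<phi> x * indicator {h<..\<tau>} x) \<le> (\<Sum>j<n. ennreal (c j) * indicator (Ik h (j + 1)) x)"
    proof (cases "x \<in> {h<..\<tau>}")
      case True
      then have xt: "x \<le> real n * h" using nh by simp
      define k0 where "k0 = nat \<lceil>x / h\<rceil> - 1"
      have k0: "x \<in> Ik h k0" "k0 < n" using Ik_find[OF h x] xt unfolding k0_def by auto
      have "k0 \<noteq> 0"
      proof
        assume "k0 = 0"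
        then have "x \<le> h" using k0(1) by (simp add: Ik_def)
        then show False using True by simp
      qed
      then obtain j where j: "k0 = j + 1" by (cases k0) auto
      have jn: "j < n" using k0(2) j by simp
      have "h * real (j + 1) < x" using k0(1) j by (simp add: Ik_def algebra_simps)
      moreover have "0 < h * real (j + 1)" using h by simp
      ultimately have "\<phi> x \<le> c j" unfolding c_def using a by (auto simp: antit_def)
      then have "ennreal (\<phi> x * indicator {h<..\<tau>} x) \<le> ennreal (c j) * indicator (Ik h (j + 1)) x"
        using True k0(1) j by (simp add: ennreal_leI)
      also have "\<dots> \<le> (\<Sum>j<n. ennreal (c j) * indicator (Ik h (j + 1)) x)"
        by (rule member_le_sum) (use jn in auto)
      finally show ?thesis .
    next
      case False then show ?thesis by simp
    qed
  qed
  also have "\<dots> = (\<Sum>j<n. (\<integral>\<^sup>+x. ennreal (c j) * indicator (Ik h (j + 1)) x \<partial>M0))"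
    by (rule nn_integral_sum) (use Ik_sets[OF h] in measurable)
  also have "\<dots> = (\<Sum>j<n. ennreal (c j) * ennreal h)"
    by (intro sum.cong refl, subst nn_integral_cmult_indicator) (auto simp: Ik_sets[OF h] Ik_meas[OF h])
  also have "\<dots> = ennreal (h * (\<Sum>j<n. c j))"
    using c0 h by (simp add: ennreal_mult'' sum_distrib_left mult.commute flip: sum_ennreal)
  finally show ?thesis by (simp add: h_def c_def)
qed

lemma loc_int_tau:
  assumes ri: "ri_bfs X N" and \<phi>: "\<phi> \<in> X" and a: "antit \<phi>" and \<tau>: "0 < \<tau>" and pos: "0 < \<phi> \<tau>"
  shows "(\<integral>\<^sup>+x. ennreal (\<phi> x * indicator {0<..\<tau>} x) \<partial>M0) < \<infinity>"
proof -
  have bfs: "bfs X N" using ri by (rule ri_bfs)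
  have \<phi>m: "\<phi> \<in> borel_measurable M0" using a by (rule antit_meas)
  define c0 where "c0 = \<phi> \<tau>"
  have ind0: "(indicator {0<..\<tau>} :: real \<Rightarrow> real) \<in> borel_measurable M0" by (rule ind_Ioc_meas) simp
  have "(\<lambda>x. c0 * indicator {0<..\<tau>} x) \<in> X \<and> N (\<lambda>x. c0 * indicator {0<..\<tau>} x) \<le> N \<phi>"
  proof (rule bfs_ideal[OF bfs _ \<phi>])
    show "(\<lambda>x. c0 * indicator {0<..\<tau>} x) \<in> borel_measurable M0" using ind0 by measurable
    show "AE x in M0. \<bar>c0 * indicator {0<..\<tau>} x\<bar> \<le> \<phi> x"
    proof (rule AE_I2)
      fix x assume "x \<in> space M0"
      then have x: "0 < x" by simp
      show "\<bar>c0 * indicator {0<..\<tau>} x\<bar> \<le> \<phi> x"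
        using a x pos unfolding c0_def antit_def by (auto simp: indicator_def)
    qed
  qed
  then have "(\<lambda>x. inverse c0 * (c0 * indicator {0<..\<tau>} x)) \<in> X" using bfs_smult[OF bfs] by blast
  moreover have "(\<lambda>x. inverse c0 * (c0 * indicator {0<..\<tau>} x)) = indicator {0<..\<tau>}"
    using pos by (auto simp: c0_def)
  ultimately have chX: "indicator {0<..\<tau>} \<in> X" by simp
  let ?Nc = "N (indicator {0<..\<tau>})"
  have Nc: "0 < ?Nc"
  proof -
    have "0 \<le> ?Nc" by (rule bfs_nonneg[OF bfs chX])
    moreover have "?Nc \<noteq> 0"
    proof
      assume "?Nc = 0"
      then have "AE x in M0. (indicator {0<..\<tau>} x :: real) = 0" using bfs_zero[OF bfs chX] by simp
      then have "AE x in M0. (indicator {0<..<\<tau>} x :: real) = 0"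
        by eventually_elim (auto simp: indicator_def split: if_splits)
      then show False using AE_ind_zero \<tau> by blast
    qed
    ultimately show ?thesis by simp
  qed
  define Q where "Q = N \<phi> / ?Nc"
  define F where "F m x = ennreal (\<phi> x * indicator {\<tau> / real (Suc m)<..\<tau>} x)" for m x
  have Fb: "integral\<^sup>N M0 (F m) \<le> ennreal (\<tau> * Q)" for m
  proof -
    let ?n = "Suc m"
    have sb: "(\<Sum>j<?n. \<phi> (\<tau> / real ?n * real (j + 1))) * ?Nc \<le> real ?n * N \<phi>"
      by (rule avg_bound[OF ri \<phi> a \<tau> chX]) simp
    have "\<tau> / real ?n * (\<Sum>j<?n. \<phi> (\<tau> / real ?n * real (j + 1))) \<le> \<tau> * Q"
    proof -
      have "(\<Sum>j<?n. \<phi> (\<tau> / real ?n * real (j + 1))) \<le> real ?n * N \<phi> / ?Nc"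
        using sb Nc by (simp add: pos_le_divide_eq)
      then have "\<tau> / real ?n * (\<Sum>j<?n. \<phi> (\<tau> / real ?n * real (j + 1))) \<le> \<tau> / real ?n * (real ?n * N \<phi> / ?Nc)"
        using \<tau> by (intro mult_left_mono) auto
      also have "\<dots> = \<tau> * Q" by (simp add: Q_def)
      finally show ?thesis .
    qed
    then show ?thesis
      unfolding F_def using step_int_bound[OF a \<tau>, of ?n] by (meson ennreal_leI order_trans zero_less_Suc)
  qed
  have Fm: "F m \<in> borel_measurable M0" for m
  proof -
    have "(indicator {\<tau> / real (Suc m)<..\<tau>} :: real \<Rightarrow> real) \<in> borel_measurable M0"
      by (rule ind_Ioc_meas) (use \<tau> in simp)
    then show ?thesis unfolding F_def using \<phi>m by measurable
  qed
  have Finc: "incseq F"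
  proof (rule incseq_SucI, rule le_funI)
    fix m x
    have "\<tau> / real (Suc (Suc m)) \<le> \<tau> / real (Suc m)" using \<tau> by (intro divide_left_mono) auto
    then show "F m x \<le> F (Suc m) x"
      unfolding F_def by (cases "x \<in> {\<tau> / real (Suc m)<..\<tau>}") (auto intro: ennreal_leI)
  qed
  have Fsup: "(SUP m. F m x) = ennreal (\<phi> x * indicator {0<..\<tau>} x)" for x
  proof (cases "x \<in> {0<..\<tau>}")
    case True
    then have x: "0 < x" "x \<le> \<tau>" by auto
    obtain M where M: "inverse (real (Suc M)) < x / \<tau>" using reals_Archimedean[of "x / \<tau>"] x \<tau> by auto
    then have "\<tau> / real (Suc M) < x" using \<tau> by (simp add: field_simps)
    then have FM: "F M x = ennreal (\<phi> x * indicator {0<..\<tau>} x)" using x by (simp add: F_def)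
    have le: "F m x \<le> ennreal (\<phi> x * indicator {0<..\<tau>} x)" for m
      unfolding F_def using x by (cases "x \<in> {\<tau> / real (Suc m)<..\<tau>}") auto
    show ?thesis
      by (rule antisym) (auto intro: SUP_least le SUP_upper2[where i=M] simp: FM)
  next
    case False
    have "F m x = 0" for m
    proof -
      have "0 < \<tau> / real (Suc m)" using \<tau> by simp
      then have "x \<notin> {\<tau> / real (Suc m)<..\<tau>}" using False by auto
      then show ?thesis by (simp add: F_def)
    qed
    then show ?thesis using False by simp
  qed
  have "(\<integral>\<^sup>+x. ennreal (\<phi> x * indicator {0<..\<tau>} x) \<partial>M0) = (\<integral>\<^sup>+x. (SUP m. F m x) \<partial>M0)"
    by (simp add: Fsup)
  also have "\<dots> = (SUP m. integral\<^sup>N M0 (F m))" by (rule nn_integral_monotone_convergence_SUP[OF Finc Fm])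
  also have "\<dots> \<le> ennreal (\<tau> * Q)" by (rule SUP_least) (rule Fb)
  also have "\<dots> < \<infinity>" by simp
  finally show ?thesis .
qed

lemma loc_int:
  assumes ri: "ri_bfs X N" and \<phi>: "\<phi> \<in> X" and a: "antit \<phi>"
  shows "(\<integral>\<^sup>+x. ennreal (\<phi> x * indicator {0<..1} x) \<partial>M0) < \<infinity>"
proof (cases "\<exists>\<tau>\<in>{0<..1}. 0 < \<phi> \<tau>")
  case True
  then obtain \<tau> where \<tau>: "0 < \<tau>" "\<tau> \<le> 1" "0 < \<phi> \<tau>" by auto
  have \<phi>m: "\<phi> \<in> borel_measurable M0" using a by (rule antit_meas)
  have i1: "(indicator {0<..\<tau>} :: real \<Rightarrow> real) \<in> borel_measurable M0" by (rule ind_Ioc_meas) simp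
  have i2: "(indicator {\<tau><..1} :: real \<Rightarrow> real) \<in> borel_measurable M0" by (rule ind_Ioc_meas) (use \<tau> in simp)
  have "(\<integral>\<^sup>+x. ennreal (\<phi> x * indicator {0<..1} x) \<partial>M0)
      \<le> (\<integral>\<^sup>+x. ennreal (\<phi> x * indicator {0<..\<tau>} x) + ennreal (\<phi> \<tau>) * indicator {\<tau><..1} x \<partial>M0)"
  proof (rule nn_integral_mono)
    fix x assume "x \<in> space M0"
    then have x: "0 < x" by simp
    show "ennreal (\<phi> x * indicator {0<..1} x) \<le> ennreal (\<phi> x * indicator {0<..\<tau>} x) + ennreal (\<phi> \<tau>) * indicator {\<tau><..1} x"
    proof (cases "x \<le> \<tau>")
      case True then show ?thesis using x \<tau> by (auto simp: indicator_def)
    next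
      case False
      then have "\<phi> x \<le> \<phi> \<tau>" using a \<tau> by (auto simp: antit_def)
      then show ?thesis using x False by (auto simp: indicator_def intro: ennreal_leI)
    qed
  qed
  also have "\<dots> = (\<integral>\<^sup>+x. ennreal (\<phi> x * indicator {0<..\<tau>} x) \<partial>M0) + (\<integral>\<^sup>+x. ennreal (\<phi> \<tau>) * indicator {\<tau><..1} x \<partial>M0)"
  proof (rule nn_integral_add)
    show "(\<lambda>x. ennreal (\<phi> x * indicator {0<..\<tau>} x)) \<in> borel_measurable M0" using \<phi>m i1 by measurable
    have "(indicator {\<tau><..1} :: real \<Rightarrow> ennreal) \<in> borel_measurable M0" by (rule ind_Ioc_meas') (use \<tau> in simp)
    then show "(\<lambda>x. ennreal (\<phi> \<tau>) * indicator {\<tau><..1} x) \<in> borel_measurable M0" by measurable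
  qed
  also have "(\<integral>\<^sup>+x. ennreal (\<phi> \<tau>) * indicator {\<tau><..1} x \<partial>M0) = ennreal (\<phi> \<tau>) * emeasure M0 {\<tau><..1}"
    by (rule nn_integral_cmult_indicator) (rule sets_M0_borel, use \<tau> in auto)
  also have "emeasure M0 {\<tau><..1} = ennreal (1 - \<tau>)" using \<tau> by (subst emeasure_M0) auto
  also have "(\<integral>\<^sup>+x. ennreal (\<phi> x * indicator {0<..\<tau>} x) \<partial>M0) + ennreal (\<phi> \<tau>) * ennreal (1 - \<tau>) < \<infinity>"
    using loc_int_tau[OF ri \<phi> a \<tau>(1) \<tau>(3)] by (simp add: ennreal_mult_less_top)
  finally show ?thesis .
next
  case False
  note nopos = False
  have "(\<integral>\<^sup>+x. ennreal (\<phi> x * indicator {0<..1} x) \<partial>M0) = (\<integral>\<^sup>+x. 0 \<partial>M0)"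
  proof (rule nn_integral_cong)
    fix x assume "x \<in> space M0"
    then have x: "0 < x" by simp
    show "ennreal (\<phi> x * indicator {0<..1} x) = 0"
    proof (cases "x \<le> 1")
      case True
      then have "x \<in> {0<..1}" using x by simp
      then have "\<phi> x \<le> 0" using nopos by (simp add: not_less)
      then show ?thesis by (simp add: ennreal_eq_0_iff mult_nonpos_nonneg)
    next
      case False then show ?thesis by simp
    qed
  qed
  then show ?thesis by simp
qed

lemma key_ineq:
  fixes a g h :: real
  assumes a: "0 \<le> a" and g: "0 \<le> g" and h: "0 \<le> h" and le: "a \<le> sqrt g * sqrt h"
  shows "a \<le> sqrt (g + min h a) * sqrt (min h (g + min h a))"
proof -
  define G where "G = g + min h a"
  define H where "H = min h G"
  have G0: "0 \<le> G" "g \<le> G" using a h g by (auto simp: G_def)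
  have H0: "0 \<le> H" using G0 h by (auto simp: H_def)
  have "a * a \<le> (sqrt g * sqrt h) * (sqrt g * sqrt h)" using le a by (intro mult_mono) auto
  also have "\<dots> = g * h" using g h by (simp add: algebra_simps)
  finally have aa: "a * a \<le> g * h" .
  have "a * a \<le> G * H"
  proof (cases "h \<le> G")
    case True
    then have "H = h" by (simp add: H_def)
    moreover have "g * h \<le> G * h" using G0 h by (intro mult_right_mono) auto
    ultimately show ?thesis using aa by simp
  next
    case False
    then have HG: "H = G" by (simp add: H_def)
    have "a \<le> G"
    proof (cases "a \<le> h")
      case True then show ?thesis using g by (simp add: G_def)
    next
      case False
      then have "G = g + h" by (simp add: G_def)
      then show ?thesis using \<open>\<not> h \<le> G\<close> g by simp
    qed
    then have "a * a \<le> G * G" using a by (intro mult_mono) auto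
    then show ?thesis using HG by simp
  qed
  then have "a \<le> sqrt (G * H)" by (intro real_le_rsqrt) (simp add: power2_eq_square)
  then show ?thesis using a G0 H0 by (simp add: real_sqrt_mult G_def H_def)
qed

lemma fix_GH:
  assumes riY: "ri_bfs Y NY" and riZ: "ri_bfs Z NZ"
    and G0: "is_decr G0" "G0 \<in> Y" and H0: "is_decr H0" "H0 \<in> Z"
    and f: "is_decr f" and fle: "\<forall>x>0. f x \<le> sqrt (G0 x) * sqrt (H0 x)"
    and uY: "(\<lambda>x. min (H0 x) (f x)) \<in> Y"
  shows "\<exists>G H. is_decr G \<and> G \<in> Y \<and> is_decr H \<and> H \<in> Z \<and>
           (\<forall>x>0. f x \<le> sqrt (G x) * sqrt (H x) \<and> H x \<le> G x)"
proof -
  define G where "G = (\<lambda>x. G0 x + min (H0 x) (f x))"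
  define H where "H = (\<lambda>x. min (H0 x) (G x))"
  have bY: "bfs Y NY" and bZ: "bfs Z NZ" using riY riZ by (auto intro: ri_bfs)
  have GY: "G \<in> Y" unfolding G_def by (rule bfs_add[OF bY G0(2) uY])
  have dG: "is_decr G"
    using G0(1) H0(1) f unfolding is_decr_def G_def
    by (auto intro!: continuous_intros add_mono min.mono)
  have dH: "is_decr H"
    using dG H0(1) unfolding is_decr_def H_def
    by (auto intro!: continuous_intros simp: min_le_iff_disj)
  have Hm: "H \<in> borel_measurable M0"
    unfolding H_def using bfs_meas[OF bZ H0(2)] bfs_meas[OF bY GY] by measurable
  have HZ: "H \<in> Z"
  proof -
    have "AE x in M0. \<bar>H x\<bar> \<le> H0 x"
    proof (rule AE_I2)
      fix x assume "x \<in> space M0"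
      then have "0 \<le> H x" using dH by (auto simp: is_decr_def)
      then show "\<bar>H x\<bar> \<le> H0 x" by (simp add: H_def)
    qed
    then show ?thesis using bfs_ideal[OF bZ Hm H0(2)] by blast
  qed
  have "\<forall>x>0. f x \<le> sqrt (G x) * sqrt (H x) \<and> H x \<le> G x"
  proof (intro allI impI conjI)
    fix x :: real assume x: "0 < x"
    have "0 \<le> f x" "0 \<le> G0 x" "0 \<le> H0 x" using f G0(1) H0(1) x by (auto simp: is_decr_def)
    then show "f x \<le> sqrt (G x) * sqrt (H x)"
      unfolding H_def G_def using key_ineq fle x by blast
    show "H x \<le> G x" by (simp add: H_def)
  qed
  then show ?thesis using dG GY dH HZ by blast
qed

definition pt :: "real \<Rightarrow> real" where
  "pt x = (if x < 1 then 1 / 2 else real (nat \<lfloor>x\<rfloor>))"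

lemma pt_props:
  assumes x: "0 < x"
  shows "0 < pt x" "x / 2 \<le> pt x" "nat \<lfloor>pt x\<rfloor> = nat \<lfloor>x\<rfloor>"
    "(if nat \<lfloor>x\<rfloor> + 1 \<le> 1 then 1 / 2 else real (nat \<lfloor>x\<rfloor> + 1) - 1) = pt x"
proof -
  show "0 < pt x" by (auto simp: pt_def)
  show "x / 2 \<le> pt x"
  proof (cases "x < 1")
    case True then show ?thesis by (simp add: pt_def)
  next
    case False
    then have "real (nat \<lfloor>x\<rfloor>) = real_of_int \<lfloor>x\<rfloor>" by simp
    moreover have "x / 2 \<le> real_of_int \<lfloor>x\<rfloor>"
    proof (cases "x < 2")
      case True
      have "1 \<le> \<lfloor>x\<rfloor>" using False by simp
      then show ?thesis using True by linarith
    next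
      case False
      have "x - 1 < real_of_int \<lfloor>x\<rfloor>" by linarith
      then show ?thesis using False by linarith
    qed
    ultimately show ?thesis using False by (simp add: pt_def)
  qed
  show "nat \<lfloor>pt x\<rfloor> = nat \<lfloor>x\<rfloor>"
  proof (cases "x < 1")
    case True
    then have "\<lfloor>x\<rfloor> = 0" using x by (simp add: floor_eq_iff)
    moreover have "\<lfloor>1 / 2 :: real\<rfloor> = 0" by (simp add: floor_eq_iff)
    ultimately show ?thesis using True by (simp add: pt_def)
  next
    case False then show ?thesis by (simp add: pt_def)
  qed
  show "(if nat \<lfloor>x\<rfloor> + 1 \<le> 1 then 1 / 2 else real (nat \<lfloor>x\<rfloor> + 1) - 1) = pt x"
  proof (cases "x < 1")
    case True
    then have "\<lfloor>x\<rfloor> = 0" using x by (simp add: floor_eq_iff)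
    then show ?thesis using True by (simp add: pt_def)
  next
    case False
    then have "1 \<le> \<lfloor>x\<rfloor>" by simp
    then have "\<not> nat \<lfloor>x\<rfloor> + 1 \<le> 1" by linarith
    then show ?thesis using False by (simp add: pt_def)
  qed
qed

lemma pt_mono:
  assumes "0 < x" "x \<le> y" shows "pt x \<le> pt y"
proof (cases "y < 1")
  case True then show ?thesis using assms by (simp add: pt_def)
next
  case False
  then have y1: "1 \<le> \<lfloor>y\<rfloor>" by simp
  then have ry: "real (nat \<lfloor>y\<rfloor>) = real_of_int \<lfloor>y\<rfloor>" by simp
  show ?thesis
  proof (cases "x < 1")
    case True
    have "1 \<le> nat \<lfloor>y\<rfloor>" using y1 by (subst le_nat_iff) auto
    then have "(1::real) \<le> real (nat \<lfloor>y\<rfloor>)" by (metis of_nat_1 of_nat_le_iff)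
    then have "1 / 2 \<le> real (nat \<lfloor>y\<rfloor>)" by linarith
    then show ?thesis using False True by (simp add: pt_def)
  next
    case False
    then have "\<lfloor>x\<rfloor> \<le> \<lfloor>y\<rfloor>" using assms by (simp add: floor_mono)
    then show ?thesis using False \<open>\<not> y < 1\<close> by (simp add: pt_def nat_mono)
  qed
qed

lemma pt_loc:
  assumes x: "0 < x" and y: "x \<le> y" "y < real_of_int \<lfloor>x\<rfloor> + 1"
  shows "pt y = pt x"
proof -
  have "\<lfloor>y\<rfloor> = \<lfloor>x\<rfloor>" using y by (simp add: floor_eq_iff) linarith
  moreover have "(y < 1) = (x < 1)"
  proof
    assume "x < 1"
    then have "\<lfloor>x\<rfloor> = 0" using x by (simp add: floor_eq_iff)
    then show "y < 1" using y by simp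
  qed (use y in auto)
  ultimately show ?thesis by (simp add: pt_def)
qed

lemma stepify:
  assumes riY: "ri_bfs Y NY" and G: "is_decr G" "G \<in> Y"
  shows "is_decr (\<lambda>x. G (pt x)) \<and> (\<lambda>x. G (pt x)) \<in> Y \<and> step_form (\<lambda>x. G (pt x))"
proof (intro conjI)
  have bY: "bfs Y NY" using riY by (rule ri_bfs)
  have aG: "antit G" using G(1) by (rule decr_antit)
  have anti: "antit (\<lambda>x. G (pt x))"
    unfolding antit_def
  proof (intro conjI allI impI)
    fix x y :: real assume "0 < x" "x \<le> y"
    then show "G (pt y) \<le> G (pt x)" using aG pt_mono[of x y] pt_props(1)[of x] by (auto simp: antit_def)
  next
    fix x :: real assume "0 < x"
    then show "0 \<le> G (pt x)" using aG pt_props(1)[of x] by (auto simp: antit_def)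
  qed
  show "is_decr (\<lambda>x. G (pt x))"
    unfolding is_decr_def
  proof (intro conjI allI impI)
    fix x :: real assume x: "0 < x"
    show "0 \<le> G (pt x)" using anti x by (auto simp: antit_def)
    show "continuous (at_right x) (\<lambda>x. G (pt x))"
      unfolding continuous_within
    proof (rule tendsto_eventually)
      show "\<forall>\<^sub>F y in at_right x. G (pt y) = G (pt x)"
        unfolding eventually_at_right_field
      proof (intro exI[of _ "real_of_int \<lfloor>x\<rfloor> + 1"] conjI allI impI)
        show "x < real_of_int \<lfloor>x\<rfloor> + 1" by linarith
        fix y assume "x < y" "y < real_of_int \<lfloor>x\<rfloor> + 1"
        then have "pt y = pt x" using pt_loc[OF x, of y] by simp
        then show "G (pt y) = G (pt x)" by simp
      qed
    qed
  next
    fix x y :: real assume "0 < x" "x \<le> y"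
    then show "G (pt y) \<le> G (pt x)" using anti by (auto simp: antit_def)
  qed
  have mG: "(\<lambda>x. G (pt x)) \<in> borel_measurable M0" using anti by (rule antit_meas)
  have DY: "(\<lambda>x. G (x / 2)) \<in> Y" by (rule dilation[OF riY G(2) aG])
  have "AE x in M0. \<bar>G (pt x)\<bar> \<le> G (x / 2)"
  proof (rule AE_I2)
    fix x assume "x \<in> space M0"
    then have x: "0 < x" by simp
    have "G (pt x) \<le> G (x / 2)" using aG pt_props(2)[OF x] x by (auto simp: antit_def)
    moreover have "0 \<le> G (pt x)" using aG pt_props(1)[OF x] by (auto simp: antit_def)
    ultimately show "\<bar>G (pt x)\<bar> \<le> G (x / 2)" by simp
  qed
  then show "(\<lambda>x. G (pt x)) \<in> Y" using bfs_ideal[OF bY mG DY] by blast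
  show "step_form (\<lambda>x. G (pt x))"
    unfolding step_form_def
  proof (intro exI[of _ "\<lambda>k. G (if k \<le> 1 then 1 / 2 else real k - 1)"] allI impI)
    fix x :: real assume x: "0 < x"
    have e: "(if nat \<lfloor>x\<rfloor> + 1 \<le> 1 then 1 / 2 else real (nat \<lfloor>x\<rfloor> + 1) - 1) = pt x"
      by (rule pt_props(4)[OF x])
    show "G (pt x) = G (if nat \<lfloor>x\<rfloor> + 1 \<le> 1 then 1 / 2 else real (nat \<lfloor>x\<rfloor> + 1) - 1)"
      by (simp only: e)
  qed
qed

theorem lemma5p1:
  fixes Y Z :: "(real \<Rightarrow> real) set" and NY NZ :: "(real \<Rightarrow> real) \<Rightarrow> real"
  assumes "ri_bfs Y NY" and "ri_bfs Z NZ"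
  shows "(Z \<inter> Linf \<subseteq> Y \<inter> Linf \<longrightarrow>
           (\<forall>f. is_decr f \<and> f \<in> CL Y Z \<and> step_form f \<longrightarrow>
              (\<exists>g h. is_decr g \<and> g \<in> Y \<and> step_form g \<and> is_decr h \<and> h \<in> Z \<and> step_form h \<and>
                 (\<forall>x>0. f x \<le> sqrt (g x) * sqrt (h x) \<and> h x \<le> g x))))
       \<and> (Z \<inter> L1 \<subseteq> Y \<inter> L1 \<longrightarrow>
           (\<forall>f. is_decr f \<and> f \<in> CL Y Z \<and> (\<forall>x>1. f x = 0) \<longrightarrow>
              (\<exists>g h. is_decr g \<and> g \<in> Y \<and> is_decr h \<and> h \<in> Z \<and>
                 (\<forall>x>0. f x \<le> sqrt (g x) * sqrt (h x) \<and> h x \<le> g x))))"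
proof (intro conjI impI allI)
  have bY: "bfs Y NY" and bZ: "bfs Z NZ" using assms by (auto intro: ri_bfs)
  have uZ: "(\<lambda>x. min (H0 x) (f x)) \<in> Z"
    if H0: "is_decr H0" "H0 \<in> Z" and f: "is_decr f" "f \<in> CL Y Z" for H0 f
  proof -
    have fm: "f \<in> borel_measurable M0" using f(2) by (simp add: CL_def)
    have "(\<lambda>x. min (H0 x) (f x)) \<in> borel_measurable M0"
      using fm bfs_meas[OF bZ H0(2)] by measurable
    moreover have "AE x in M0. \<bar>min (H0 x) (f x)\<bar> \<le> H0 x"
    proof (rule AE_I2)
      fix x assume "x \<in> space M0"
      then have "0 \<le> H0 x" "0 \<le> f x" using H0(1) f(1) by (auto simp: is_decr_def)
      then show "\<bar>min (H0 x) (f x)\<bar> \<le> H0 x" by simp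
    qed
    ultimately show ?thesis using bfs_ideal[OF bZ _ H0(2)] by blast
  qed
  {
    assume inc: "Z \<inter> Linf \<subseteq> Y \<inter> Linf"
    fix f assume fa: "is_decr f \<and> f \<in> CL Y Z \<and> step_form f"
    then have f: "is_decr f" "f \<in> CL Y Z" "step_form f" by auto
    obtain c where c: "\<And>x. 0 < x \<Longrightarrow> f x = c (nat \<lfloor>x\<rfloor> + 1)" using f(3) by (auto simp: step_form_def)
    obtain G0 H0 where G0: "is_decr G0" "G0 \<in> Y" and H0: "is_decr H0" "H0 \<in> Z"
      and fle: "\<forall>x>0. f x \<le> sqrt (G0 x) * sqrt (H0 x)"
      using core[OF assms f(1) f(2)] by blast
    have fm: "f \<in> borel_measurable M0" using f(2) by (simp add: CL_def)
    let ?u = "\<lambda>x. min (H0 x) (f x)"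
    have uZ': "?u \<in> Z" by (rule uZ[OF H0 f(1) f(2)])
    have "?u \<in> Linf"
      unfolding Linf_def
    proof (intro CollectI conjI exI)
      show "?u \<in> borel_measurable M0" using fm bfs_meas[OF bZ H0(2)] by measurable
      show "AE x in M0. \<bar>?u x\<bar> \<le> f (1 / 2)"
      proof (rule AE_I2)
        fix x assume "x \<in> space M0"
        then have x: "0 < x" by simp
        have "f x \<le> f (1 / 2)"
        proof (cases "1 / 2 \<le> x")
          case True then show ?thesis using f(1) by (auto simp: is_decr_def)
        next
          case False
          then have "\<lfloor>x\<rfloor> = 0" using x by (simp add: floor_eq_iff)
          moreover have "\<lfloor>1 / 2 :: real\<rfloor> = 0" by (simp add: floor_eq_iff)
          ultimately show ?thesis using c[OF x] c[of "1/2"] by simp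
        qed
        moreover have "0 \<le> H0 x" "0 \<le> f x" using H0(1) f(1) x by (auto simp: is_decr_def)
        ultimately show "\<bar>?u x\<bar> \<le> f (1 / 2)" by simp
      qed
    qed
    then have uY: "?u \<in> Y" using inc uZ' by blast
    obtain G H where G: "is_decr G" "G \<in> Y" and H: "is_decr H" "H \<in> Z"
      and GH: "\<forall>x>0. f x \<le> sqrt (G x) * sqrt (H x) \<and> H x \<le> G x"
      using fix_GH[OF assms G0 H0 f(1) fle uY] by blast
    have A: "is_decr (\<lambda>x. G (pt x)) \<and> (\<lambda>x. G (pt x)) \<in> Y \<and> step_form (\<lambda>x. G (pt x))"
      by (rule stepify[OF assms(1) G])
    have B: "is_decr (\<lambda>x. H (pt x)) \<and> (\<lambda>x. H (pt x)) \<in> Z \<and> step_form (\<lambda>x. H (pt x))"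
      by (rule stepify[OF assms(2) H])
    have "\<forall>x>0. f x \<le> sqrt (G (pt x)) * sqrt (H (pt x)) \<and> H (pt x) \<le> G (pt x)"
    proof (intro allI impI)
      fix x :: real assume x: "0 < x"
      have p: "0 < pt x" by (rule pt_props(1)[OF x])
      have "f x = f (pt x)" using c[OF x] c[OF p] pt_props(3)[OF x] by simp
      then show "f x \<le> sqrt (G (pt x)) * sqrt (H (pt x)) \<and> H (pt x) \<le> G (pt x)"
        using GH p by simp
    qed
    then show "\<exists>g h. is_decr g \<and> g \<in> Y \<and> step_form g \<and> is_decr h \<and> h \<in> Z \<and> step_form h \<and>
                 (\<forall>x>0. f x \<le> sqrt (g x) * sqrt (h x) \<and> h x \<le> g x)"
      using A B by blast
  }
  {
    assume inc: "Z \<inter> L1 \<subseteq> Y \<inter> L1"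
    fix f assume fa: "is_decr f \<and> f \<in> CL Y Z \<and> (\<forall>x>1. f x = 0)"
    then have f: "is_decr f" "f \<in> CL Y Z" "\<forall>x>1. f x = 0" by auto
    obtain G0 H0 where G0: "is_decr G0" "G0 \<in> Y" and H0: "is_decr H0" "H0 \<in> Z"
      and fle: "\<forall>x>0. f x \<le> sqrt (G0 x) * sqrt (H0 x)"
      using core[OF assms f(1) f(2)] by blast
    have fm: "f \<in> borel_measurable M0" using f(2) by (simp add: CL_def)
    let ?u = "\<lambda>x. min (H0 x) (f x)"
    have uZ': "?u \<in> Z" by (rule uZ[OF H0 f(1) f(2)])
    have um: "?u \<in> borel_measurable M0" using fm bfs_meas[OF bZ H0(2)] by measurable
    have "integrable M0 ?u"
    proof (rule integrableI_bounded[OF um])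
      have "(\<integral>\<^sup>+x. ennreal (norm (?u x)) \<partial>M0) \<le> (\<integral>\<^sup>+x. ennreal (H0 x * indicator {0<..1} x) \<partial>M0)"
      proof (rule nn_integral_mono)
        fix x assume "x \<in> space M0"
        then have x: "0 < x" by simp
        have "0 \<le> H0 x" "0 \<le> f x" using H0(1) f(1) x by (auto simp: is_decr_def)
        moreover have "x > 1 \<Longrightarrow> f x = 0" using f(3) by simp
        ultimately show "ennreal (norm (?u x)) \<le> ennreal (H0 x * indicator {0<..1} x)"
          using x by (cases "x \<le> 1") (auto intro: ennreal_leI simp: indicator_def)
      qed
      also have "\<dots> < \<infinity>" by (rule loc_int[OF assms(2) H0(2) decr_antit[OF H0(1)]])
      finally show "(\<integral>\<^sup>+x. ennreal (norm (?u x)) \<partial>M0) < \<infinity>" .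
    qed
    then have "?u \<in> L1" by (simp add: L1_def)
    then have uY: "?u \<in> Y" using inc uZ' by blast
    show "\<exists>g h. is_decr g \<and> g \<in> Y \<and> is_decr h \<and> h \<in> Z \<and>
                 (\<forall>x>0. f x \<le> sqrt (g x) * sqrt (h x) \<and> h x \<le> g x)"
      using fix_GH[OF assms G0 H0 f(1) fle uY] by blast
  }
qed

end
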